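(* (1) Condition (i) below is satisfied by $x\mapsto\max\{0,x\}^k$ for every integer $k\ge2$, by the exponential linear unit $x\chi_{x\ge0}(x)+(e^x-1)\chi_{x<0}(x)$, by the softsign $x/(1+|x|)$, and by the inverse square root linear unit $x\chi_{x\ge0}(x)+\frac{x}{\sqrt{1+ax^2}}\chi_{x<0}(x)$ ($a>0$): (i) $\varrho\in C^1(\mathbb{R})\setminus C^\infty(\mathbb{R})$. (2) The inverse square root unit $x/\sqrt{1+ax^2}$ ($a>0$), the sigmoid $1/(1+e^{-x})$, $\tanh$ and $\arctan$ are bounded, analytic and not constant. (3) The softplus function $\ln(1+e^x)$ belongs to $C^1(\mathbb{R})$ and is approximately homogeneous of order $(1,0)$. Consequently, for each of these activation functions $\varrho$, every $B>0$ and every architecture $S=(d,N_1,\dots,N_{L-1},1)$ with $L\ge2$ (and $N_{L-1}\ge 2$ in cases (1) and (2)), the set $\mathcal{RNN}_\varrho^{[-B,B]^d}(S)$ is not closed in $C([-B,B]^d)$.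
   Context: A neural network with architecture $S=(N_0,\dots,N_L)$ ($N_0=d$) is a family $\Phi=((A_\ell,b_\ell))_{\ell=1}^L$, $A_\ell\in\mathbb{R}^{N_\ell\times N_{\ell-1}}$, $b_\ell\in\mathbb{R}^{N_\ell}$; $\mathcal{NN}(S)$ is the set of these. For $\varrho:\mathbb{R}\to\mathbb{R}$ and $\Omega\subset\mathbb{R}^d$, $\mathrm{R}_\varrho^\Omega(\Phi):\Omega\to\mathbb{R}^{N_L}$, $x\mapsto x_L$, where $x_0=x$, $x_\ell=\varrho(A_\ell x_{\ell-1}+b_\ell)$ for $1\le\ell\le L-1$ (componentwise), $x_L=A_Lx_{L-1}+b_L$; $\mathcal{RNN}_\varrho^\Omega(S)=\{\mathrm{R}_\varrho^\Omega(\Phi):\Phi\in\mathcal{NN}(S)\}$. A function $f:\mathbb{R}\to\mathbb{R}$ is approximately homogeneous of order $(r,q)\in\mathbb{N}_0^2$ if there is $s>0$ with $|f(x)-x^r|\le s$ for all $x\ge0$ and $|f(x)-x^q|\le s$ for all $x\le0$. *)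

theory Defs
  imports "HOL-Analysis.Analysis"
begin

definition C1 :: "(real \<Rightarrow> real) \<Rightarrow> bool" where
  "C1 f \<longleftrightarrow> (\<exists>f'. (\<forall>x. (f has_real_derivative f' x) (at x)) \<and> continuous_on UNIV f')"

definition Cinf :: "(real \<Rightarrow> real) \<Rightarrow> bool" where
  "Cinf f \<longleftrightarrow> (\<exists>D :: nat \<Rightarrow> real \<Rightarrow> real. D 0 = f \<and>
      (\<forall>n x. (D n has_real_derivative D (Suc n) x) (at x)))"

definition real_analytic :: "(real \<Rightarrow> real) \<Rightarrow> bool" where
  "real_analytic f \<longleftrightarrow> (\<forall>x0. \<exists>r>0. \<exists>c :: nat \<Rightarrow> real.
      \<forall>x. \<bar>x - x0\<bar> < r \<longrightarrow> (\<lambda>n. c n * (x - x0) ^ n) sums f x)"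

definition approx_homogeneous :: "nat \<Rightarrow> nat \<Rightarrow> (real \<Rightarrow> real) \<Rightarrow> bool" where
  "approx_homogeneous r q f \<longleftrightarrow> (\<exists>s>0. (\<forall>x\<ge>0. \<bar>f x - x ^ r\<bar> \<le> s) \<and> (\<forall>x\<le>0. \<bar>f x - x ^ q\<bar> \<le> s))"

definition relu_pow :: "nat \<Rightarrow> real \<Rightarrow> real" where
  "relu_pow k x = (max 0 x) ^ k"

definition elu :: "real \<Rightarrow> real" where
  "elu x = (if x \<ge> 0 then x else exp x - 1)"

definition softsign :: "real \<Rightarrow> real" where
  "softsign x = x / (1 + \<bar>x\<bar>)"

definition isrlu :: "real \<Rightarrow> real \<Rightarrow> real" where
  "isrlu a x = (if x \<ge> 0 then x else x / sqrt (1 + a * x^2))"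

definition isru :: "real \<Rightarrow> real \<Rightarrow> real" where
  "isru a x = x / sqrt (1 + a * x^2)"

definition sigmoid :: "real \<Rightarrow> real" where
  "sigmoid x = 1 / (1 + exp (- x))"

definition softplus :: "real \<Rightarrow> real" where
  "softplus x = ln (1 + exp x)"

text \<open>An architecture is a list S = [N_0, ..., N_L] (N_0 = d). A network is given by
  weights A l i j (layer l in 1..L, row i < N_l, column j < N_(l-1)) and biases b l i;
  entries outside these ranges are irrelevant. Inputs are x :: nat => real, only
  coordinates j < d are used.\<close>

fun hidden :: "(real \<Rightarrow> real) \<Rightarrow> nat list \<Rightarrow> (nat \<Rightarrow> nat \<Rightarrow> nat \<Rightarrow> real) \<Rightarrow> (nat \<Rightarrow> nat \<Rightarrow> real)
                 \<Rightarrow> nat \<Rightarrow> (nat \<Rightarrow> real) \<Rightarrow> (nat \<Rightarrow> real)" where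
  "hidden \<rho> S A b 0 x = x"
| "hidden \<rho> S A b (Suc l) x =
     (\<lambda>i. \<rho> ((\<Sum>j<S ! l. A (Suc l) i j * hidden \<rho> S A b l x j) + b (Suc l) i))"

definition realization :: "(real \<Rightarrow> real) \<Rightarrow> nat list \<Rightarrow> (nat \<Rightarrow> nat \<Rightarrow> nat \<Rightarrow> real)
                             \<Rightarrow> (nat \<Rightarrow> nat \<Rightarrow> real) \<Rightarrow> (nat \<Rightarrow> real) \<Rightarrow> real" where
  "realization \<rho> S A b x =
     (let L = length S - 1 in
      (\<Sum>j<S ! (L - 1). A L 0 j * hidden \<rho> S A b (L - 1) x j) + b L 0)"

definition cube :: "nat \<Rightarrow> real \<Rightarrow> (nat \<Rightarrow> real) set" where
  "cube d B = {x. (\<forall>i<d. \<bar>x i\<bar> \<le> B) \<and> (\<forall>i\<ge>d. x i = 0)}"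

definition in_RNN :: "(real \<Rightarrow> real) \<Rightarrow> nat list \<Rightarrow> (nat \<Rightarrow> real) set \<Rightarrow> ((nat \<Rightarrow> real) \<Rightarrow> real) \<Rightarrow> bool" where
  "in_RNN \<rho> S \<Omega> f \<longleftrightarrow> (\<exists>A b. \<forall>x\<in>\<Omega>. f x = realization \<rho> S A b x)"

definition RNN_not_closed :: "(real \<Rightarrow> real) \<Rightarrow> nat list \<Rightarrow> (nat \<Rightarrow> real) set \<Rightarrow> bool" where
  "RNN_not_closed \<rho> S \<Omega> \<longleftrightarrow>
     (\<exists>g :: nat \<Rightarrow> (nat \<Rightarrow> real) \<Rightarrow> real. \<exists>f.
        (\<forall>n. in_RNN \<rho> S \<Omega> (g n)) \<and> continuous_on \<Omega> f \<and>
        uniform_limit \<Omega> g f sequentially \<and> \<not> in_RNN \<rho> S \<Omega> f)"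

definition scalar_arch :: "nat list \<Rightarrow> bool" where
  "scalar_arch S \<longleftrightarrow> length S \<ge> 3 \<and> (\<forall>i<length S. S ! i \<ge> 1) \<and> last S = 1"

end

theory Submission
  imports Defs "HOL-Complex_Analysis.Complex_Analysis"
begin


definition Ck :: "nat \<Rightarrow> (real \<Rightarrow> real) \<Rightarrow> bool" where
  "Ck m f \<longleftrightarrow> (\<exists>D. D 0 = f \<and> (\<forall>j<m. \<forall>x. (D j has_real_derivative D (Suc j) x) (at x))
      \<and> continuous_on UNIV (D m))"

lemma Ck_0: "Ck 0 f \<longleftrightarrow> continuous_on UNIV f"
  unfolding Ck_def by (auto intro!: exI[of _ "\<lambda>_. f"])

lemma Ck_Suc: "Ck (Suc m) f \<longleftrightarrow> (\<exists>f'. (\<forall>x. (f has_real_derivative f' x) (at x)) \<and> Ck m f')"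
proof
  assume "Ck (Suc m) f"
  then obtain D where D: "D 0 = f" "\<forall>j<Suc m. \<forall>x. (D j has_real_derivative D (Suc j) x) (at x)"
    "continuous_on UNIV (D (Suc m))" unfolding Ck_def by blast
  show "\<exists>f'. (\<forall>x. (f has_real_derivative f' x) (at x)) \<and> Ck m f'"
    apply (rule exI[of _ "D 1"])
    using D unfolding Ck_def
    by (auto intro!: exI[of _ "\<lambda>j. D (Suc j)"])
next
  assume "\<exists>f'. (\<forall>x. (f has_real_derivative f' x) (at x)) \<and> Ck m f'"
  then obtain f' D where f': "\<forall>x. (f has_real_derivative f' x) (at x)" and D: "D 0 = f'"
    "\<forall>j<m. \<forall>x. (D j has_real_derivative D (Suc j) x) (at x)" "continuous_on UNIV (D m)"
    unfolding Ck_def by blast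
  show "Ck (Suc m) f"
    unfolding Ck_def
    apply (rule exI[of _ "\<lambda>j. if j = 0 then f else D (j - 1)"])
    using f' D by (auto simp: less_Suc_eq_0_disj)
qed

lemma Ck_cont: "Ck m f \<Longrightarrow> continuous_on UNIV f"
proof (induction m arbitrary: f)
  case 0 then show ?case by (simp add: Ck_0)
next
  case (Suc m)
  then obtain f' where "\<forall>x. (f has_real_derivative f' x) (at x)" by (auto simp: Ck_Suc)
  then show ?case
    by (meson DERIV_isCont continuous_at_imp_continuous_on)
qed

lemma Ck_mono: "Ck (Suc m) f \<Longrightarrow> Ck m f"
proof (induction m arbitrary: f)
  case 0 then show ?case using Ck_cont Ck_0 by blast
next
  case (Suc m)
  then obtain f' where "\<forall>x. (f has_real_derivative f' x) (at x)" "Ck (Suc m) f'"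
    by (auto simp: Ck_Suc)
  then show ?case using Suc.IH by (auto simp: Ck_Suc)
qed

lemma Ck_mono_le: "Ck m f \<Longrightarrow> k \<le> m \<Longrightarrow> Ck k f"
  by (induction m) (auto simp: le_Suc_eq dest: Ck_mono)

lemma Ck_const: "Ck m (\<lambda>x. c)"
  by (induction m arbitrary: c) (auto simp: Ck_0 Ck_Suc intro!: exI[of _ "\<lambda>x. 0"] derivative_eq_intros)

lemma Ck_id: "Ck m (\<lambda>x. x)"
  by (cases m) (auto simp: Ck_0 Ck_Suc Ck_const intro!: exI[of _ "\<lambda>x. 1"] derivative_eq_intros continuous_intros)

lemma Ck_add: "Ck m f \<Longrightarrow> Ck m g \<Longrightarrow> Ck m (\<lambda>x. f x + g x)"
proof (induction m arbitrary: f g)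
  case 0 then show ?case by (auto simp: Ck_0 intro: continuous_intros)
next
  case (Suc m)
  then obtain f' g' where "\<forall>x. (f has_real_derivative f' x) (at x)" "Ck m f'"
    "\<forall>x. (g has_real_derivative g' x) (at x)" "Ck m g'" by (auto simp: Ck_Suc)
  then show ?case using Suc.IH
    by (auto simp: Ck_Suc intro!: exI[of _ "\<lambda>x. f' x + g' x"] derivative_eq_intros)
qed

lemma Ck_mult: "Ck m f \<Longrightarrow> Ck m g \<Longrightarrow> Ck m (\<lambda>x. f x * g x)"
proof (induction m arbitrary: f g)
  case 0 then show ?case by (auto simp: Ck_0 intro: continuous_intros)
next
  case (Suc m)
  then obtain f' g' where d: "\<forall>x. (f has_real_derivative f' x) (at x)" "Ck m f'"
    "\<forall>x. (g has_real_derivative g' x) (at x)" "Ck m g'" by (auto simp: Ck_Suc)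
  have "Ck m f" "Ck m g" using Suc.prems Ck_mono by auto
  then have "Ck m (\<lambda>x. f' x * g x + f x * g' x)"
    using Suc.IH d by (intro Ck_add) auto
  then show ?case using d
    by (auto simp: Ck_Suc intro!: exI[of _ "\<lambda>x. f' x * g x + f x * g' x"] derivative_eq_intros)
qed

lemma Ck_compose: "Ck m f \<Longrightarrow> Ck m g \<Longrightarrow> Ck m (\<lambda>x. f (g x))"
proof (induction m arbitrary: f g)
  case 0 then show ?case
    by (auto simp: Ck_0 intro!: continuous_on_compose2[of UNIV f UNIV g])
next
  case (Suc m)
  then obtain f' g' where d: "\<forall>x. (f has_real_derivative f' x) (at x)" "Ck m f'"
    "\<forall>x. (g has_real_derivative g' x) (at x)" "Ck m g'" by (auto simp: Ck_Suc)
  have "Ck m g" using Suc.prems Ck_mono by auto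
  then have "Ck m (\<lambda>x. f' (g x) * g' x)"
    using Suc.IH d by (intro Ck_mult) auto
  then show ?case using d DERIV_chain2[OF d(1)[rule_format] d(3)[rule_format]]
    by (auto simp: Ck_Suc intro!: exI[of _ "\<lambda>x. f' (g x) * g' x"])
qed

lemma Ck_cmult: "Ck m f \<Longrightarrow> Ck m (\<lambda>x. c * f x)"
  using Ck_mult[OF Ck_const] by blast

lemma Ck_sum: "(\<And>j. j \<in> J \<Longrightarrow> Ck m (f j)) \<Longrightarrow> Ck m (\<lambda>x. \<Sum>j\<in>J. f j x)"
proof (induction J rule: infinite_finite_induct)
  case (infinite A) then show ?case by (simp add: Ck_const)
next
  case empty then show ?case by (simp add: Ck_const)
next
  case (insert x F) then show ?case by (simp add: Ck_add)
qed


lemma cont_right_zero: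
  fixes f :: "real \<Rightarrow> real"
  assumes "isCont f 0" "e > 0" "\<And>t. 0 < t \<Longrightarrow> t < e \<Longrightarrow> f t = 0"
  shows "f 0 = 0"
proof -
  have "(f \<longlongrightarrow> f 0) (at_right 0)" using assms(1)
    by (simp add: isCont_def filterlim_at_split)
  moreover have "(f \<longlongrightarrow> 0) (at_right 0)"
  proof (rule tendsto_eventually)
    show "eventually (\<lambda>t. f t = 0) (at_right (0::real))"
      unfolding eventually_at_right_field using assms(2,3) by blast
  qed
  ultimately show ?thesis by (rule tendsto_unique[rotated]) simp
qed

lemma obstruction1:
  fixes G :: "real \<Rightarrow> real"
  assumes Ck: "Ck m G" and m: "1 \<le> m" and e: "e > 0" and c: "c > 0"
    and right: "\<And>t. 0 \<le> t \<Longrightarrow> t < e \<Longrightarrow> G t = G 0"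
    and left: "\<And>t. -e < t \<Longrightarrow> t < 0 \<Longrightarrow> c * \<bar>t\<bar> ^ m \<le> \<bar>G t - G 0\<bar>"
  shows False
proof -
  obtain D where D0: "D 0 = G" and Dd: "\<And>j x. j < m \<Longrightarrow> (D j has_real_derivative D (Suc j) x) (at x)"
    and Dc: "continuous_on UNIV (D m)" using Ck unfolding Ck_def by blast
  have Dcont: "isCont (D j) x" if "j \<le> m" for j x
  proof (cases "j < m")
    case True then show ?thesis using Dd DERIV_isCont by blast
  next
    case False then have "j = m" using that by simp
    then show ?thesis using Dc by (simp add: continuous_on_eq_continuous_at)
  qed
  have claim: "\<forall>t. 0 \<le> t \<and> t < e \<longrightarrow> D j t = (if j = 0 then G 0 else 0)" if "j \<le> m" for j
    using that
  proof (induction j)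
    case 0 show ?case
    proof (intro allI impI)
      fix t :: real assume "0 \<le> t \<and> t < e"
      then have "G t = G 0" using right by blast
      then show "D 0 t = (if 0 = (0::nat) then G 0 else 0)" using D0 by simp
    qed
  next
    case (Suc j)
    have IH: "\<And>t. 0 \<le> t \<Longrightarrow> t < e \<Longrightarrow> D j t = (if j = 0 then G 0 else 0)"
      using Suc by auto
    have pos: "D (Suc j) t = 0" if t: "0 < t" "t < e" for t
    proof (rule DERIV_local_const[OF Dd[of j t]])
      show "j < m" using Suc by simp
      show "0 < min t (e - t)" using t by simp
      show "\<forall>y. \<bar>t - y\<bar> < min t (e - t) \<longrightarrow> D j t = D j y"
        using t IH by auto
    qed
    have "D (Suc j) 0 = 0"
      by (rule cont_right_zero[OF Dcont[OF Suc.prems] e]) (use pos in auto)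
    then show ?case using pos by (auto simp: order_le_less)
  qed
  have Dm0: "D m 0 = 0" using claim[of m] m e by auto
  have "\<forall>r>0. \<exists>s>0. \<forall>x. x \<noteq> 0 \<and> norm (x - 0) < s \<longrightarrow> norm (D m x - D m 0) < r"
    using Dcont[of m 0] by (simp add: isCont_def LIM_eq)
  moreover have "c * fact m > 0" using c by simp
  ultimately obtain s where s: "s > 0" and sb0: "\<forall>x. x \<noteq> 0 \<and> norm (x - 0) < s \<longrightarrow> norm (D m x - D m 0) < c * fact m"
    by blast
  have sb: "\<bar>D m x\<bar> < c * fact m" if "x \<noteq> 0" "\<bar>x\<bar> < s" for x
    using sb0 that Dm0 by auto
  define h where "h = - min e s / 2"
  have h: "h < 0" "-e < h" "-s < h" using e s by (auto simp: h_def)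
  obtain xi where xi: "h < xi" "xi < 0" and tay:
    "G h = (\<Sum>i<m. D i 0 / fact i * h ^ i) + D m xi / fact m * h ^ m"
  proof -
    have "\<forall>i t. i < m \<and> h \<le> t \<and> t \<le> 0 \<longrightarrow> DERIV (D i) t :> D (Suc i) t"
      using Dd by blast
    from Maclaurin_minus[OF h(1) _ D0 this] m show ?thesis using that by auto
  qed
  have "(\<Sum>i<m. D i 0 / fact i * h ^ i) = (\<Sum>i<m. if i = 0 then G 0 else 0)"
  proof (rule sum.cong)
    fix i assume "i \<in> {..<m}"
    then show "D i 0 / fact i * h ^ i = (if i = 0 then G 0 else 0)"
      using claim[of i] e by auto
  qed simp
  also have "\<dots> = G 0" using m by (simp add: sum.delta)
  finally have "G h - G 0 = D m xi / fact m * h ^ m" using tay by simp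
  then have "\<bar>G h - G 0\<bar> = \<bar>D m xi\<bar> / fact m * \<bar>h\<bar> ^ m" by (simp add: abs_mult power_abs)
  also have "\<dots> < c * \<bar>h\<bar> ^ m"
  proof -
    have "\<bar>D m xi\<bar> < c * fact m" using sb xi h by auto
    then have "\<bar>D m xi\<bar> / fact m < c" by (simp add: divide_less_eq mult.commute)
    moreover have "\<bar>h\<bar> ^ m > 0" using h by simp
    ultimately have "\<bar>D m xi\<bar> / fact m * \<bar>h\<bar> ^ m < c * \<bar>h\<bar> ^ m"
      by (rule mult_strict_right_mono)
    then show ?thesis by simp
  qed
  finally show False using left[of h] h by simp
qed

lemma obstruction2:
  fixes G :: "real \<Rightarrow> real"
  assumes d: "(G has_real_derivative D) (at 0)" and e: "e > 0" and c: "c > 0"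
    and both: "\<And>t. \<bar>t\<bar> < e \<Longrightarrow> c * \<bar>t\<bar> \<le> G 0 - G t"
  shows False
proof -
  have lim: "((\<lambda>y. (G y - G 0) / (y - 0)) \<longlongrightarrow> D) (at 0)"
    using d by (simp add: has_field_derivative_iff)
  have r: "((\<lambda>y. (G y - G 0) / (y - 0)) \<longlongrightarrow> D) (at_right 0)"
    using lim by (simp add: filterlim_at_split)
  have l: "((\<lambda>y. (G y - G 0) / (y - 0)) \<longlongrightarrow> D) (at_left 0)"
    using lim by (simp add: filterlim_at_split)
  have "D \<le> -c"
  proof (rule tendsto_upperbound[OF r])
    show "eventually (\<lambda>y. (G y - G 0) / (y - 0) \<le> -c) (at_right (0::real))"
      unfolding eventually_at_right_field
    proof (intro exI[of _ e] conjI allI impI)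
      fix y :: real assume y: "0 < y" "y < e"
      then have "c * y \<le> G 0 - G y" using both[of y] by simp
      then show "(G y - G 0) / (y - 0) \<le> -c" using y by (simp add: divide_le_eq)
    qed (use e in auto)
  qed simp
  moreover have "D \<ge> c"
  proof (rule tendsto_lowerbound[OF l])
    show "eventually (\<lambda>y. c \<le> (G y - G 0) / (y - 0)) (at_left (0::real))"
      unfolding eventually_at_left_field
    proof (intro exI[of _ "-e"] conjI allI impI)
      fix y :: real assume y: "-e < y" "y < 0"
      then have "c * (-y) \<le> G 0 - G y" using both[of y] by simp
      then show "c \<le> (G y - G 0) / (y - 0)" using y by (simp add: le_divide_eq)
    qed (use e in auto)
  qed simp
  ultimately show False using c by simp
qed


fun zc :: "(real \<Rightarrow> real) \<Rightarrow> (nat \<Rightarrow> real) \<Rightarrow> (nat \<Rightarrow> real) \<Rightarrow> (nat \<Rightarrow> real) \<Rightarrow> (nat \<Rightarrow> real)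
            \<Rightarrow> nat \<Rightarrow> real \<Rightarrow> real" where
  "zc \<rho> \<alpha> \<beta> \<kappa> \<mu> 0 t = t"
| "zc \<rho> \<alpha> \<beta> \<kappa> \<mu> (Suc l) t = \<kappa> (Suc l) * \<rho> (\<alpha> (Suc l) * zc \<rho> \<alpha> \<beta> \<kappa> \<mu> l t + \<beta> (Suc l)) + \<mu> (Suc l)"

definition kk :: "(nat \<Rightarrow> real) \<Rightarrow> nat \<Rightarrow> real" where "kk \<kappa> l = (if l = 0 then 1 else \<kappa> l)"
definition mm :: "(nat \<Rightarrow> real) \<Rightarrow> nat \<Rightarrow> real" where "mm \<mu> l = (if l = 0 then 0 else \<mu> l)"

definition netA :: "nat \<Rightarrow> (nat \<Rightarrow> real) \<Rightarrow> (nat \<Rightarrow> real) \<Rightarrow> real \<Rightarrow> real \<Rightarrow> nat \<Rightarrow> nat \<Rightarrow> nat \<Rightarrow> real" where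
  "netA L \<alpha> \<kappa> a1 c1 l i j = (if l = L then (if i = 0 \<and> j = 0 then \<kappa> (L-1) else if i = 0 \<and> j = 1 then c1 else 0)
     else if j = 0 then (if i = 0 then \<alpha> l * kk \<kappa> (l-1) else if l = L-1 \<and> i = 1 then a1 * kk \<kappa> (l-1) else 0) else 0)"

definition netB :: "nat \<Rightarrow> (nat \<Rightarrow> real) \<Rightarrow> (nat \<Rightarrow> real) \<Rightarrow> (nat \<Rightarrow> real) \<Rightarrow> real \<Rightarrow> real \<Rightarrow> nat \<Rightarrow> nat \<Rightarrow> real" where
  "netB L \<alpha> \<beta> \<mu> a1 b1 l i = (if l = L then (if i = 0 then \<mu> (L-1) else 0)
     else if i = 0 then \<alpha> l * mm \<mu> (l-1) + \<beta> l else if l = L-1 \<and> i = 1 then a1 * mm \<mu> (l-1) + b1 else 0)"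

lemma sum_first: "0 < (N::nat) \<Longrightarrow> (\<Sum>j<N. (if j = 0 then X else 0) * h j) = (X::real) * h 0"
proof -
  assume N: "0 < N"
  have "(\<Sum>j<N. (if j = 0 then X else 0) * h j) = (\<Sum>j<N. if j = 0 then X * h 0 else 0)"
    by (rule sum.cong) auto
  also have "\<dots> = X * h 0" using N by (simp add: sum.delta)
  finally show ?thesis .
qed

lemma sum_first2: "0 < (N::nat) \<Longrightarrow> (\<Sum>j<N. (if j = 0 then X else if j = 1 then Y else 0) * h j)
   = (X::real) * h 0 + (if 2 \<le> N then Y * h 1 else 0)"
proof -
  assume N: "0 < N"
  have "(\<Sum>j<N. (if j = 0 then X else if j = 1 then Y else 0) * h j)
      = (\<Sum>j<N. (if j = 0 then X * h 0 else 0) + (if j = 1 then Y * h 1 else 0))"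
    by (rule sum.cong) auto
  also have "\<dots> = X * h 0 + (if 2 \<le> N then Y * h 1 else 0)"
    using N by (simp add: sum.distrib sum.delta)
  finally show ?thesis .
qed

lemma hidden_chain:
  assumes L: "2 \<le> L" and S: "\<forall>l<L. 1 \<le> S ! l" and l: "l \<le> L - 1"
  shows "kk \<kappa> l * hidden \<rho> S (netA L \<alpha> \<kappa> a1 c1) (netB L \<alpha> \<beta> \<mu> a1 b1) l x 0 + mm \<mu> l
           = zc \<rho> \<alpha> \<beta> \<kappa> \<mu> l (x 0)"
  using l
proof (induction l)
  case 0 then show ?case by (simp add: kk_def mm_def)
next
  case (Suc l)
  have Sl: "0 < S ! l" using S Suc.prems L proof -
    have "l < L" using Suc.prems L by simp
    then show ?thesis using S by (auto dest: spec[of _ l])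
  qed
  have ne: "Suc l \<noteq> L" using Suc.prems L by simp
  have "hidden \<rho> S (netA L \<alpha> \<kappa> a1 c1) (netB L \<alpha> \<beta> \<mu> a1 b1) (Suc l) x 0
     = \<rho> (\<alpha> (Suc l) * (kk \<kappa> l * hidden \<rho> S (netA L \<alpha> \<kappa> a1 c1) (netB L \<alpha> \<beta> \<mu> a1 b1) l x 0 + mm \<mu> l) + \<beta> (Suc l))"
    using ne Sl by (simp add: netA_def netB_def sum_first algebra_simps cong: if_cong)
  also have "\<dots> = \<rho> (\<alpha> (Suc l) * zc \<rho> \<alpha> \<beta> \<kappa> \<mu> l (x 0) + \<beta> (Suc l))"
    using Suc by simp
  finally show ?case by (simp add: kk_def mm_def)
qed

lemma hidden_chain1:
  assumes L: "2 \<le> L" and S: "\<forall>l<L. 1 \<le> S ! l"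
  shows "hidden \<rho> S (netA L \<alpha> \<kappa> a1 c1) (netB L \<alpha> \<beta> \<mu> a1 b1) (L - 1) x 1
           = \<rho> (a1 * zc \<rho> \<alpha> \<beta> \<kappa> \<mu> (L - 2) (x 0) + b1)"
proof -
  define l where "l = L - 2"
  have l: "L - 1 = Suc l" "L - 2 = l" using L by (auto simp: l_def)
  have "l < L" using L by (simp add: l_def)
  then have Sl: "0 < S ! l" using S by (auto dest: spec[of _ l])
  have ne: "Suc l \<noteq> L" using l L by simp
  have "hidden \<rho> S (netA L \<alpha> \<kappa> a1 c1) (netB L \<alpha> \<beta> \<mu> a1 b1) (Suc l) x 1
     = \<rho> (a1 * (kk \<kappa> l * hidden \<rho> S (netA L \<alpha> \<kappa> a1 c1) (netB L \<alpha> \<beta> \<mu> a1 b1) l x 0 + mm \<mu> l) + b1)"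
    using ne Sl l by (simp add: netA_def netB_def sum_first algebra_simps cong: if_cong)
  also have "\<dots> = \<rho> (a1 * zc \<rho> \<alpha> \<beta> \<kappa> \<mu> l (x 0) + b1)"
    using hidden_chain[OF L S, of l] l by simp
  finally show ?thesis using l by simp
qed

lemma realization_chain:
  assumes S: "scalar_arch S" and c1: "2 \<le> S ! (length S - 2) \<or> c1 = 0"
  shows "realization \<rho> S (netA (length S - 1) \<alpha> \<kappa> a1 c1) (netB (length S - 1) \<alpha> \<beta> \<mu> a1 b1) x
     = zc \<rho> \<alpha> \<beta> \<kappa> \<mu> (length S - 2) (x 0) + c1 * \<rho> (a1 * zc \<rho> \<alpha> \<beta> \<kappa> \<mu> (length S - 3) (x 0) + b1)"
proof -
  define L where "L = length S - 1"
  have L: "2 \<le> L" using S by (auto simp: scalar_arch_def L_def)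
  have SS: "\<forall>l<L. 1 \<le> S ! l" using S by (auto simp: scalar_arch_def L_def)
  have L1: "L - 1 = length S - 2" "L - 2 = length S - 3" by (auto simp: L_def)
  have "L - 1 < L" using L by simp
  then have pos: "0 < S ! (L - 1)" using SS by (auto dest: spec[of _ "L - 1"])
  have h0: "kk \<kappa> (L-1) * hidden \<rho> S (netA L \<alpha> \<kappa> a1 c1) (netB L \<alpha> \<beta> \<mu> a1 b1) (L-1) x 0 + mm \<mu> (L-1)
           = zc \<rho> \<alpha> \<beta> \<kappa> \<mu> (L-1) (x 0)" by (rule hidden_chain[OF L SS]) simp
  note h1 = hidden_chain1[OF L SS, of \<rho> \<alpha> \<kappa> a1 c1 \<beta> \<mu> b1 x]
  have "realization \<rho> S (netA L \<alpha> \<kappa> a1 c1) (netB L \<alpha> \<beta> \<mu> a1 b1) x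
     = \<kappa> (L - 1) * hidden \<rho> S (netA L \<alpha> \<kappa> a1 c1) (netB L \<alpha> \<beta> \<mu> a1 b1) (L-1) x 0 + 
       (if 2 \<le> S ! (L - 1) then c1 * hidden \<rho> S (netA L \<alpha> \<kappa> a1 c1) (netB L \<alpha> \<beta> \<mu> a1 b1) (L-1) x 1 else 0)
       + \<mu> (L - 1)"
    unfolding realization_def Let_def L_def[symmetric]
    using sum_first2[OF pos, of "\<kappa> (L-1)" c1] by (simp add: netA_def netB_def cong: if_cong)
  also have "\<dots> = zc \<rho> \<alpha> \<beta> \<kappa> \<mu> (L-1) (x 0) + c1 * \<rho> (a1 * zc \<rho> \<alpha> \<beta> \<kappa> \<mu> (L - 2) (x 0) + b1)"
    using h0 h1 c1 L L1 by (auto simp: kk_def mm_def)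
  finally show ?thesis using L1 by (simp add: L_def)
qed


definition line :: "real \<Rightarrow> nat \<Rightarrow> real" where "line t = (\<lambda>i. if i = 0 then t else 0)"

lemma line_cube: "1 \<le> d \<Longrightarrow> \<bar>t\<bar> \<le> B \<Longrightarrow> line t \<in> cube d B"
  by (auto simp: line_def cube_def)

lemma line_0 [simp]: "line t 0 = t" by (simp add: line_def)

lemma hidden_Ck: "Ck m \<rho> \<Longrightarrow> Ck m (\<lambda>t. hidden \<rho> S A b l (line t) i)"
proof (induction l arbitrary: i)
  case 0 then show ?case by (cases "i = 0") (auto simp: line_def Ck_id Ck_const)
next
  case (Suc l)
  have "Ck m (\<lambda>t. (\<Sum>j<S ! l. A (Suc l) i j * hidden \<rho> S A b l (line t) j) + b (Suc l) i)"
    using Suc by (intro Ck_add Ck_sum Ck_cmult Ck_const) auto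
  then show ?case using Ck_compose[OF Suc.prems] by simp
qed

lemma realization_Ck: "Ck m \<rho> \<Longrightarrow> Ck m (\<lambda>t. realization \<rho> S A b (line t))"
  unfolding realization_def Let_def
  by (intro Ck_add Ck_sum Ck_cmult Ck_const hidden_Ck)

lemma cont_bound:
  fixes w :: "real \<Rightarrow> real"
  assumes "continuous_on UNIV w"
  shows "\<exists>R\<ge>0. \<forall>t. \<bar>t\<bar> \<le> B \<longrightarrow> \<bar>w t\<bar> \<le> R"
proof -
  have "compact (w ` {-B..B})"
    by (rule compact_continuous_image) (use assms continuous_on_subset in auto)
  then have "bounded (w ` {-B..B})" by (rule compact_imp_bounded)
  then obtain R where R: "\<forall>y\<in>w ` {-B..B}. norm y \<le> R" by (auto simp: bounded_iff)
  show ?thesis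
  proof (intro exI[of _ "max R 0"] conjI allI impI)
    fix t assume "\<bar>t\<bar> \<le> B"
    then have "t \<in> {-B..B}" by (simp add: abs_le_iff)
    then have "norm (w t) \<le> R" using R by blast
    then show "\<bar>w t\<bar> \<le> max R 0" by simp
  qed simp
qed

lemma dq_uniform:
  fixes \<rho> \<rho>' :: "real \<Rightarrow> real"
  assumes der: "\<And>x. (\<rho> has_real_derivative \<rho>' x) (at x)" and cont: "continuous_on UNIV \<rho>'"
    and eps: "\<epsilon> > 0"
  shows "\<exists>N. \<forall>n\<ge>N. \<forall>y. \<bar>y\<bar> \<le> R \<longrightarrow>
           \<bar>(real n + 1) * (\<rho> (y + 1 / (real n + 1)) - \<rho> y) - \<rho>' y\<bar> < \<epsilon>"
proof -
  have "uniformly_continuous_on {-R-1..R+1} \<rho>'"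
    by (rule compact_uniformly_continuous) (use cont continuous_on_subset in auto)
  then obtain d where d: "d > 0" and dd: "\<And>x x'. x \<in> {-R-1..R+1} \<Longrightarrow> x' \<in> {-R-1..R+1} \<Longrightarrow>
      dist x' x < d \<Longrightarrow> dist (\<rho>' x') (\<rho>' x) < \<epsilon>"
    using eps unfolding uniformly_continuous_on_def by metis
  obtain N where N: "inverse (real (Suc N)) < min d 1" using reals_Archimedean[of "min d 1"] d by auto
  show ?thesis
  proof (intro exI[of _ N] allI impI)
    fix n y assume n: "N \<le> n" and y: "\<bar>y\<bar> \<le> R"
    define h where "h = 1 / (real n + 1)"
    have h: "0 < h" "h < d" "h < 1"
    proof -
      show "0 < h" by (simp add: h_def)
      have "h \<le> inverse (real (Suc N))" using n by (simp add: h_def divide_simps)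
      then show "h < d" "h < 1" using N by auto
    qed
    obtain z where z: "y < z" "z < y + h" and mvt: "\<rho> (y + h) - \<rho> y = (y + h - y) * \<rho>' z"
      using MVT2[of y "y + h" \<rho> \<rho>'] h der by auto
    have "(real n + 1) * (\<rho> (y + h) - \<rho> y) = \<rho>' z" using mvt by (simp add: h_def)
    moreover have "dist (\<rho>' z) (\<rho>' y) < \<epsilon>"
      by (rule dd) (use y z h in \<open>auto simp: dist_real_def\<close>)
    ultimately show "\<bar>(real n + 1) * (\<rho> (y + 1 / (real n + 1)) - \<rho> y) - \<rho>' y\<bar> < \<epsilon>"
      by (simp add: h_def dist_real_def)
  qed
qed


definition obsA :: "(real \<Rightarrow> real) \<Rightarrow> nat \<Rightarrow> bool" where
  "obsA g m \<longleftrightarrow> (\<exists>e>0. \<exists>c>0. (\<forall>u. 0 \<le> u \<and> u < e \<longrightarrow> g u = g 0) \<and>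
                  (\<forall>u. -e < u \<and> u < 0 \<longrightarrow> c * \<bar>u\<bar> ^ m \<le> \<bar>g u - g 0\<bar>))"

definition obsB :: "(real \<Rightarrow> real) \<Rightarrow> bool" where
  "obsB g \<longleftrightarrow> (\<exists>e>0. \<exists>c>0. \<forall>u. \<bar>u\<bar> < e \<longrightarrow> c * \<bar>u\<bar> \<le> g 0 - g u)"

lemma zc_cong:
  assumes "\<And>k. 1 \<le> k \<Longrightarrow> k \<le> l \<Longrightarrow> \<alpha> k = \<alpha>' k \<and> \<beta> k = \<beta>' k \<and> \<kappa> k = \<kappa>' k \<and> \<mu> k = \<mu>' k"
  shows "zc \<rho> \<alpha> \<beta> \<kappa> \<mu> l t = zc \<rho> \<alpha>' \<beta>' \<kappa>' \<mu>' l t"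
  using assms by (induction l) auto

lemma psi_props:
  fixes \<rho> \<rho>' :: "real \<Rightarrow> real"
  assumes der: "\<And>x. (\<rho> has_real_derivative \<rho>' x) (at x)"
    and posr: "\<And>y. 1 \<le> y \<Longrightarrow> 0 \<le> \<rho> y \<and> 0 < \<rho>' y"
  shows "(\<forall>t. \<exists>d. (zc \<rho> (\<lambda>_. 1) (\<lambda>_. 1) (\<lambda>_. 1) (\<lambda>_. 0) l has_real_derivative d) (at t))
     \<and> 0 \<le> zc \<rho> (\<lambda>_. 1) (\<lambda>_. 1) (\<lambda>_. 1) (\<lambda>_. 0) l 0
     \<and> (\<exists>d>0. (zc \<rho> (\<lambda>_. 1) (\<lambda>_. 1) (\<lambda>_. 1) (\<lambda>_. 0) l has_real_derivative d) (at 0))"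
proof (induction l)
  case 0
  have "((\<lambda>t. t) has_real_derivative 1) (at t)" for t :: real by (rule DERIV_ident)
  then show ?case by (auto intro!: exI[of _ "1::real"])
next
  case (Suc l)
  define p where "p = zc \<rho> (\<lambda>_. 1) (\<lambda>_. 1) (\<lambda>_. 1) (\<lambda>_. 0) l"
  have eq: "zc \<rho> (\<lambda>_. 1) (\<lambda>_. 1) (\<lambda>_. 1) (\<lambda>_. 0) (Suc l) = (\<lambda>t. \<rho> (p t + 1))"
    by (simp add: p_def fun_eq_iff)
  have dd: "((\<lambda>t. \<rho> (p t + 1)) has_real_derivative \<rho>' (p t + 1) * d) (at t)"
    if "(p has_real_derivative d) (at t)" for t d
  proof -
    have "((\<lambda>t. p t + 1) has_real_derivative d) (at t)"
      using that by (auto intro!: derivative_eq_intros)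
    then show ?thesis by (rule DERIV_chain2[OF der])
  qed
  have p0: "0 \<le> p 0" using Suc by (simp add: p_def)
  obtain d where d: "d > 0" "(p has_real_derivative d) (at 0)" using Suc by (auto simp: p_def)
  have "0 < \<rho>' (p 0 + 1) * d" using posr[of "p 0 + 1"] p0 d by simp
  moreover have "0 \<le> \<rho> (p 0 + 1)" using posr[of "p 0 + 1"] p0 by simp
  ultimately show ?case unfolding eq using Suc dd d(2) unfolding p_def[symmetric] by blast
qed

lemma local_sign:
  fixes \<psi> :: "real \<Rightarrow> real"
  assumes d: "(\<psi> has_real_derivative d) (at 0)" "d > 0" and e: "e > 0"
  shows "\<exists>\<epsilon>>0. \<exists>a>0. \<forall>t. \<bar>t\<bar> < \<epsilon> \<longrightarrow> \<bar>\<psi> t - \<psi> 0\<bar> < e \<and>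
            (0 \<le> t \<longrightarrow> a * t \<le> \<psi> t - \<psi> 0) \<and> (t \<le> 0 \<longrightarrow> \<psi> t - \<psi> 0 \<le> a * t)"
proof -
  have lim: "((\<lambda>y. (\<psi> y - \<psi> 0) / (y - 0)) \<longlongrightarrow> d) (at 0)"
    using d by (simp add: has_field_derivative_iff)
  have ev1: "eventually (\<lambda>y. d / 2 < (\<psi> y - \<psi> 0) / (y - 0)) (at 0)"
    by (rule order_tendstoD(1)[OF lim]) (use d in simp)
  have "isCont \<psi> 0" using d DERIV_isCont by blast
  then have "(\<psi> \<longlongrightarrow> \<psi> 0) (at 0)" by (simp add: isCont_def)
  then have ev2: "eventually (\<lambda>y. dist (\<psi> y) (\<psi> 0) < e) (at 0)"
    using e by (rule tendstoD)
  from eventually_conj[OF ev1 ev2] obtain \<epsilon> where eps: "\<epsilon> > 0"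
    and P: "\<And>y. y \<noteq> 0 \<Longrightarrow> dist y 0 < \<epsilon> \<Longrightarrow> d / 2 < (\<psi> y - \<psi> 0) / (y - 0) \<and> dist (\<psi> y) (\<psi> 0) < e"
    unfolding eventually_at by blast
  have main: "\<bar>\<psi> t - \<psi> 0\<bar> < e \<and> (0 \<le> t \<longrightarrow> d / 2 * t \<le> \<psi> t - \<psi> 0) \<and> (t \<le> 0 \<longrightarrow> \<psi> t - \<psi> 0 \<le> d / 2 * t)"
    if t: "\<bar>t\<bar> < \<epsilon>" for t
  proof (cases "t = 0")
    case True then show ?thesis using e by simp
  next
    case False
    then have 1: "d / 2 < (\<psi> t - \<psi> 0) / t" and 2: "\<bar>\<psi> t - \<psi> 0\<bar> < e"
      using P[of t] t by (auto simp: dist_real_def)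
    have 3: "d / 2 * t \<le> \<psi> t - \<psi> 0" if "0 \<le> t"
      using 1 that False by (simp add: less_divide_eq)
    have 4: "\<psi> t - \<psi> 0 \<le> d / 2 * t" if "t \<le> 0"
      using 1 that False by (simp add: less_divide_eq)
    show ?thesis using 2 3 4 by blast
  qed
  have "0 < d / 2" using d by simp
  then show ?thesis using eps main by blast
qed


lemma C1_family_not_closed:
  fixes \<rho> \<rho>' :: "real \<Rightarrow> real"
  assumes m: "1 \<le> m" and Ckr: "Ck m \<rho>"
    and der: "\<And>x. (\<rho> has_real_derivative \<rho>' x) (at x)"
    and cont': "continuous_on UNIV \<rho>'"
    and posr: "\<And>y. 1 \<le> y \<Longrightarrow> 0 \<le> \<rho> y \<and> 0 < \<rho>' y"
    and sig: "\<sigma> = 1 \<or> \<sigma> = -1"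
    and obs: "obsA (\<lambda>u. \<rho>' (\<sigma> * u)) m \<or> (\<sigma> = 1 \<and> m = 1 \<and> obsB \<rho>')"
    and S: "scalar_arch S" "2 \<le> S ! (length S - 2)" and B: "B > 0"
  shows "RNN_not_closed \<rho> S (cube (S ! 0) B)"
proof -
  define \<psi> where "\<psi> = zc \<rho> (\<lambda>_. 1) (\<lambda>_. 1) (\<lambda>_. 1) (\<lambda>_. 0) (length S - 3)"
  note pp = psi_props[OF der posr, of "length S - 3"]
  have \<psi>d: "\<forall>t. \<exists>d. (\<psi> has_real_derivative d) (at t)" using pp by (simp add: \<psi>_def)
  obtain d0 where d0: "d0 > 0" "(\<psi> has_real_derivative d0) (at 0)" using pp by (auto simp: \<psi>_def)
  have \<psi>c: "continuous_on UNIV \<psi>"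
    using \<psi>d by (meson DERIV_isCont continuous_at_imp_continuous_on)
  define w where "w t = \<sigma> * (\<psi> t - \<psi> 0)" for t
  have wc: "continuous_on UNIV w" unfolding w_def by (intro continuous_intros \<psi>c)
  define f where "f x = \<rho>' (w (x 0))" for x :: "nat \<Rightarrow> real"
  define g where "g n x = (real n + 1) * (\<rho> (w (x 0) + 1 / (real n + 1)) - \<rho> (w (x 0)))"
    for n and x :: "nat \<Rightarrow> real"
  define d where "d = S ! 0"
  have len: "3 \<le> length S" using S by (simp add: scalar_arch_def)
  have d1: "1 \<le> d" using S len unfolding scalar_arch_def d_def
    by (metis One_nat_def less_le_trans numeral_3_eq_3 zero_less_Suc)
  have inR: "in_RNN \<rho> S (cube d B) (g n)" for n
  proof -
    define N where "N = length S - 2"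
    define \<alpha> where "\<alpha> l = (if l = N then \<sigma> else 1)" for l
    define \<beta> where "\<beta> l = (if l = N then 1 / (real n + 1) - \<sigma> * \<psi> 0 else 1)" for l
    define \<kappa> where "\<kappa> l = (if l = N then real n + 1 else 1)" for l
    have N: "N = Suc (length S - 3)" using len by (simp add: N_def)
    have zc_eq: "zc \<rho> \<alpha> \<beta> \<kappa> (\<lambda>_. 0) (length S - 3) t = \<psi> t" for t
      unfolding \<psi>_def by (rule zc_cong) (auto simp: \<alpha>_def \<beta>_def \<kappa>_def N)
    have "realization \<rho> S (netA (length S - 1) \<alpha> \<kappa> \<sigma> (- (real n + 1))) (netB (length S - 1) \<alpha> \<beta> (\<lambda>_. 0) \<sigma> (- \<sigma> * \<psi> 0)) x
        = g n x" for x
    proof -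
      have "realization \<rho> S (netA (length S - 1) \<alpha> \<kappa> \<sigma> (- (real n + 1))) (netB (length S - 1) \<alpha> \<beta> (\<lambda>_. 0) \<sigma> (- \<sigma> * \<psi> 0)) x
        = zc \<rho> \<alpha> \<beta> \<kappa> (\<lambda>_. 0) (length S - 2) (x 0) + (- (real n + 1)) * \<rho> (\<sigma> * zc \<rho> \<alpha> \<beta> \<kappa> (\<lambda>_. 0) (length S - 3) (x 0) + - \<sigma> * \<psi> 0)"
        by (rule realization_chain) (use S in auto)
      also have "zc \<rho> \<alpha> \<beta> \<kappa> (\<lambda>_. 0) (length S - 2) (x 0)
           = (real n + 1) * \<rho> (\<sigma> * \<psi> (x 0) + (1 / (real n + 1) - \<sigma> * \<psi> 0))"
        using zc_eq N unfolding N_def[symmetric] by (simp add: \<alpha>_def \<beta>_def \<kappa>_def)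
      finally show ?thesis using zc_eq by (simp add: g_def w_def algebra_simps)
    qed
    then show ?thesis unfolding in_RNN_def by (metis (no_types))
  qed
  have fc: "continuous_on (cube d B) f"
  proof -
    have "continuous_on UNIV (\<lambda>x::nat \<Rightarrow> real. w (x 0))"
      by (rule continuous_on_compose2[OF wc continuous_on_product_coordinates]) auto
    then have "continuous_on UNIV f" unfolding f_def
      by (rule continuous_on_compose2[OF cont']) auto
    then show ?thesis by (rule continuous_on_subset) auto
  qed
  obtain R where R: "R \<ge> 0" "\<And>t. \<bar>t\<bar> \<le> B \<Longrightarrow> \<bar>w t\<bar> \<le> R" using cont_bound[OF wc, of B] by blast
  have ul: "uniform_limit (cube d B) g f sequentially"
    unfolding uniform_limit_iff
  proof (intro allI impI)
    fix \<epsilon> :: real assume eps: "\<epsilon> > 0"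
    obtain N where N: "\<And>n y. N \<le> n \<Longrightarrow> \<bar>y\<bar> \<le> R \<Longrightarrow>
           \<bar>(real n + 1) * (\<rho> (y + 1 / (real n + 1)) - \<rho> y) - \<rho>' y\<bar> < \<epsilon>"
      using dq_uniform[OF der cont' eps, of R] by blast
    show "\<forall>\<^sub>F n in sequentially. \<forall>x\<in>cube d B. dist (g n x) (f x) < \<epsilon>"
      unfolding eventually_sequentially
    proof (intro exI[of _ N] allI impI ballI)
      fix n x assume n: "N \<le> n" and x: "x \<in> cube d B"
      have "\<bar>x 0\<bar> \<le> B" using x d1 by (auto simp: cube_def)
      then have "\<bar>w (x 0)\<bar> \<le> R" by (rule R(2))
      then show "dist (g n x) (f x) < \<epsilon>" using N[OF n] by (simp add: g_def f_def dist_real_def)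
    qed
  qed
  have notin: "\<not> in_RNN \<rho> S (cube d B) f"
  proof
    assume "in_RNN \<rho> S (cube d B) f"
    then obtain A b where Ab: "\<And>x. x \<in> cube d B \<Longrightarrow> f x = realization \<rho> S A b x"
      unfolding in_RNN_def by blast
    define G where "G t = realization \<rho> S A b (line t)" for t
    have GCk: "Ck m G" unfolding G_def by (rule realization_Ck[OF Ckr])
    have Gf: "G t = \<rho>' (\<sigma> * (\<psi> t - \<psi> 0))" if "\<bar>t\<bar> \<le> B" for t
      using Ab[OF line_cube[OF d1 that]] by (simp add: G_def f_def w_def)
    have G0: "G 0 = \<rho>' 0" using Gf[of 0] B by simp
    from obs show False
    proof
      assume "obsA (\<lambda>u. \<rho>' (\<sigma> * u)) m"
      then obtain e c where e: "e > 0" and c: "c > 0"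
        and r: "\<And>u. 0 \<le> u \<Longrightarrow> u < e \<Longrightarrow> \<rho>' (\<sigma> * u) = \<rho>' 0"
        and l: "\<And>u. -e < u \<Longrightarrow> u < 0 \<Longrightarrow> c * \<bar>u\<bar> ^ m \<le> \<bar>\<rho>' (\<sigma> * u) - \<rho>' 0\<bar>"
        unfolding obsA_def by auto
      obtain \<epsilon> a where eps: "\<epsilon> > 0" and a: "a > 0" and loc: "\<And>t. \<bar>t\<bar> < \<epsilon> \<Longrightarrow> \<bar>\<psi> t - \<psi> 0\<bar> < e \<and>
            (0 \<le> t \<longrightarrow> a * t \<le> \<psi> t - \<psi> 0) \<and> (t \<le> 0 \<longrightarrow> \<psi> t - \<psi> 0 \<le> a * t)"
        using local_sign[OF d0(2) d0(1) e] by blast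
      show False
      proof (rule obstruction1[OF GCk m _ _ _ _])
        show "0 < min \<epsilon> B" using eps B by simp
        show "0 < c * a ^ m" using c a by simp
        show "G t = G 0" if "0 \<le> t" "t < min \<epsilon> B" for t
        proof -
          have "\<bar>t\<bar> < \<epsilon>" "\<bar>t\<bar> \<le> B" using that by auto
          then have "0 \<le> \<psi> t - \<psi> 0" "\<psi> t - \<psi> 0 < e" 
          proof -
            have "a * t \<le> \<psi> t - \<psi> 0" "\<bar>\<psi> t - \<psi> 0\<bar> < e" using loc[of t] that \<open>\<bar>t\<bar> < \<epsilon>\<close> by auto
            moreover have "0 \<le> a * t" using a that by simp
            ultimately show "0 \<le> \<psi> t - \<psi> 0" "\<psi> t - \<psi> 0 < e" by auto
          qed
          then show ?thesis using Gf[OF \<open>\<bar>t\<bar> \<le> B\<close>] G0 r by simp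
        qed
        show "c * a ^ m * \<bar>t\<bar> ^ m \<le> \<bar>G t - G 0\<bar>" if "- min \<epsilon> B < t" "t < 0" for t
        proof -
          have tt: "\<bar>t\<bar> < \<epsilon>" "\<bar>t\<bar> \<le> B" using that by auto
          define u where "u = \<psi> t - \<psi> 0"
          have u: "u \<le> a * t" "\<bar>u\<bar> < e" using loc[OF tt(1)] that by (auto simp: u_def)
          have un: "u < 0" using u a that by (smt (verit) mult_pos_neg)
          have "a * \<bar>t\<bar> \<le> \<bar>u\<bar>" using u un that by simp
          then have "(a * \<bar>t\<bar>) ^ m \<le> \<bar>u\<bar> ^ m" by (rule power_mono) (use a in simp)
          then have "c * a ^ m * \<bar>t\<bar> ^ m \<le> c * \<bar>u\<bar> ^ m" using c by (simp add: power_mult_distrib)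
          also have "\<dots> \<le> \<bar>\<rho>' (\<sigma> * u) - \<rho>' 0\<bar>" using l[of u] u un by simp
          finally show ?thesis using Gf[OF tt(2)] G0 by (simp add: u_def)
        qed
      qed
    next
      assume "\<sigma> = 1 \<and> m = 1 \<and> obsB \<rho>'"
      then have s1: "\<sigma> = 1" and m1: "m = 1" and "obsB \<rho>'" by auto
      then obtain e c where e: "e > 0" and c: "c > 0"
        and bb: "\<And>u. \<bar>u\<bar> < e \<Longrightarrow> c * \<bar>u\<bar> \<le> \<rho>' 0 - \<rho>' u"
        unfolding obsB_def by auto
      obtain \<epsilon> a where eps: "\<epsilon> > 0" and a: "a > 0" and loc: "\<And>t. \<bar>t\<bar> < \<epsilon> \<Longrightarrow> \<bar>\<psi> t - \<psi> 0\<bar> < e \<and>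
            (0 \<le> t \<longrightarrow> a * t \<le> \<psi> t - \<psi> 0) \<and> (t \<le> 0 \<longrightarrow> \<psi> t - \<psi> 0 \<le> a * t)"
        using local_sign[OF d0(2) d0(1) e] by blast
      obtain G' where "\<forall>x. (G has_real_derivative G' x) (at x)"
        using GCk m1 by (auto simp: Ck_Suc)
      then have GD: "(G has_real_derivative G' 0) (at 0)" by blast
      show False
      proof (rule obstruction2[OF GD])
        show "0 < min \<epsilon> B" using eps B by simp
        show "0 < c * a" using c a by simp
        show "c * a * \<bar>t\<bar> \<le> G 0 - G t" if "\<bar>t\<bar> < min \<epsilon> B" for t
        proof -
          have tt: "\<bar>t\<bar> < \<epsilon>" "\<bar>t\<bar> \<le> B" using that by auto
          define u where "u = \<psi> t - \<psi> 0"
          have u: "0 \<le> t \<Longrightarrow> a * t \<le> u" "t \<le> 0 \<Longrightarrow> u \<le> a * t" "\<bar>u\<bar> < e"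
            using loc[OF tt(1)] by (auto simp: u_def)
          have "a * \<bar>t\<bar> \<le> \<bar>u\<bar>"
          proof (cases "0 \<le> t")
            case True then show ?thesis using u(1) a by (simp add: mult_nonneg_nonneg)
          next
            case False then show ?thesis using u(2) a by simp
          qed
          then have "c * a * \<bar>t\<bar> \<le> c * \<bar>u\<bar>" using c by (simp add: mult.assoc)
          also have "\<dots> \<le> \<rho>' 0 - \<rho>' u" using bb u(3) by simp
          finally show ?thesis using Gf[OF tt(2)] G0 s1 by (simp add: u_def)
        qed
      qed
    qed
  qed
  show ?thesis unfolding RNN_not_closed_def d_def[symmetric]
    using inR fc ul notin by blast
qed


lemma Cinf_Ck_deriv:
  fixes \<rho> \<rho>' :: "real \<Rightarrow> real"
  assumes "Cinf \<rho>" and der: "\<And>x. (\<rho> has_real_derivative \<rho>' x) (at x)"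
  shows "Ck m \<rho>'"
proof -
  obtain D where D0: "D 0 = \<rho>" and Dd: "\<And>n x. (D n has_real_derivative D (Suc n) x) (at x)"
    using assms(1) unfolding Cinf_def by blast
  have D1: "D 1 = \<rho>'"
  proof
    fix x show "D 1 x = \<rho>' x" using DERIV_unique[OF Dd[of 0 x]] der[of x] D0 by simp
  qed
  have "continuous_on UNIV (D (Suc m))"
    using Dd by (meson DERIV_isCont continuous_at_imp_continuous_on)
  then show ?thesis unfolding Ck_def
    by (intro exI[of _ "\<lambda>j. D (Suc j)"]) (use D1 Dd in auto)
qed

lemma not_Cinf:
  fixes \<rho> \<rho>' :: "real \<Rightarrow> real"
  assumes der: "\<And>x. (\<rho> has_real_derivative \<rho>' x) (at x)"
    and m: "1 \<le> m"
    and obs: "obsA (\<lambda>u. \<rho>' (\<sigma> * u)) m \<or> (\<sigma> = 1 \<and> m = 1 \<and> obsB \<rho>')"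
  shows "\<not> Cinf \<rho>"
proof
  assume C: "Cinf \<rho>"
  have Ck: "Ck k \<rho>'" for k by (rule Cinf_Ck_deriv[OF C der])
  from obs show False
  proof
    assume "obsA (\<lambda>u. \<rho>' (\<sigma> * u)) m"
    then obtain e c where e: "e > 0" and c: "c > 0"
      and r: "\<And>u. 0 \<le> u \<Longrightarrow> u < e \<Longrightarrow> \<rho>' (\<sigma> * u) = \<rho>' (\<sigma> * 0)"
      and l: "\<And>u. -e < u \<Longrightarrow> u < 0 \<Longrightarrow> c * \<bar>u\<bar> ^ m \<le> \<bar>\<rho>' (\<sigma> * u) - \<rho>' (\<sigma> * 0)\<bar>"
      unfolding obsA_def by auto
    have "Ck m (\<lambda>u. \<rho>' (\<sigma> * u))" by (intro Ck_compose[OF Ck] Ck_cmult Ck_id)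
    from obstruction1[OF this m e c] r l show False by blast
  next
    assume "\<sigma> = 1 \<and> m = 1 \<and> obsB \<rho>'"
    then obtain e c where e: "e > 0" and c: "c > 0"
      and bb: "\<And>u. \<bar>u\<bar> < e \<Longrightarrow> c * \<bar>u\<bar> \<le> \<rho>' 0 - \<rho>' u"
      unfolding obsB_def by auto
    obtain r' where "\<forall>x. (\<rho>' has_real_derivative r' x) (at x)"
      using Ck[of 1] by (auto simp: Ck_Suc)
    then have "(\<rho>' has_real_derivative r' 0) (at 0)" by blast
    from obstruction2[OF this e c] bb show False by blast
  qed
qed


definition strip :: "real \<Rightarrow> complex set" where "strip \<delta> = {z. \<bar>Im z\<bar> < \<delta>}"

lemma open_strip: "open (strip \<delta>)"
  unfolding strip_def by (intro open_Collect_less continuous_intros)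

lemma ball_in_strip: "ball (complex_of_real x0) \<delta> \<subseteq> strip \<delta>"
proof
  fix z :: complex assume "z \<in> ball (of_real x0) \<delta>"
  then have "cmod (z - of_real x0) < \<delta>" by (simp add: dist_norm norm_minus_commute)
  moreover have "\<bar>Im z\<bar> = \<bar>Im (z - of_real x0)\<bar>" by simp
  moreover have "\<bar>Im (z - of_real x0)\<bar> \<le> cmod (z - of_real x0)" by (rule abs_Im_le_cmod)
  ultimately show "z \<in> strip \<delta>" by (simp add: strip_def)
qed

lemma real_analytic_from_complex:
  fixes f :: "real \<Rightarrow> real"
  assumes \<delta>: "\<delta> > 0" and hol: "F holomorphic_on strip \<delta>"
    and FR: "\<And>x. F (of_real x) = of_real (f x)"
  shows "real_analytic f"
  unfolding real_analytic_def
proof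
  fix x0 :: real
  define a where "a n = (deriv ^^ n) F (of_real x0) / fact n" for n
  have h: "F holomorphic_on ball (of_real x0) \<delta>"
    using hol ball_in_strip holomorphic_on_subset by blast
  have "(\<lambda>n. Re (a n) * (x - x0) ^ n) sums f x" if "\<bar>x - x0\<bar> < \<delta>" for x
  proof -
    have "of_real x \<in> ball (of_real x0 :: complex) \<delta>"
    proof -
      have "cmod (complex_of_real x0 - complex_of_real x) = \<bar>x0 - x\<bar>"
        by (metis norm_of_real of_real_diff)
      then show ?thesis using that by (simp add: dist_norm abs_minus_commute)
    qed
    from holomorphic_power_series[OF h this]
    have "(\<lambda>n. a n * (of_real x - of_real x0) ^ n) sums F (of_real x)" by (simp add: a_def)
    then have "(\<lambda>n. Re (a n * (of_real x - of_real x0) ^ n)) sums Re (F (of_real x))"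
      by (rule sums_Re)
    moreover have "Re (a n * (of_real x - of_real x0) ^ n) = Re (a n) * (x - x0) ^ n" for n
    proof -
      have "(of_real x - of_real x0 :: complex) ^ n = of_real ((x - x0) ^ n)" by simp
      then show ?thesis by simp
    qed
    ultimately show ?thesis using FR by simp
  qed
  then have "\<forall>x. \<bar>x - x0\<bar> < \<delta> \<longrightarrow> (\<lambda>n. Re (a n) * (x - x0) ^ n) sums f x" by blast
  then show "\<exists>r>0. \<exists>c. \<forall>x. \<bar>x - x0\<bar> < r \<longrightarrow> (\<lambda>n. c n * (x - x0) ^ n) sums f x"
    by (intro exI[of _ \<delta>] conjI[OF \<delta>] exI[of _ "\<lambda>n. Re (a n)"])
qed

lemma nonconst_from_deriv:
  fixes \<rho> :: "real \<Rightarrow> real"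
  assumes "(\<rho> has_real_derivative D) (at 0)" "D \<noteq> 0"
  shows "\<exists>x y. \<rho> x \<noteq> \<rho> y"
proof (rule ccontr)
  assume "\<not> ?thesis"
  then have "\<rho> = (\<lambda>_. \<rho> 0)" by auto
  then have "((\<lambda>_. \<rho> 0) has_real_derivative D) (at 0)" using assms(1) by simp
  then have "D = 0" using DERIV_const DERIV_unique by blast
  then show False using assms(2) by simp
qed

lemma T_uniform:
  fixes \<rho> :: "real \<Rightarrow> real"
  assumes d: "(\<rho> has_real_derivative D) (at 0)" "D \<noteq> 0" and eps: "\<epsilon> > 0" and R: "R \<ge> 0"
  shows "\<exists>N. \<forall>n\<ge>N. \<forall>y. \<bar>y\<bar> \<le> R \<longrightarrow>
     \<bar>(real n + 1) / D * (\<rho> (y / (real n + 1)) - \<rho> 0) - y\<bar> < \<epsilon>"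
proof -
  have lim: "((\<lambda>h. (\<rho> h - \<rho> 0) / (h - 0)) \<longlongrightarrow> D) (at 0)"
    using d by (simp add: has_field_derivative_iff)
  define \<eta> where "\<eta> = \<epsilon> * \<bar>D\<bar> / (R + 1)"
  have \<eta>: "\<eta> > 0" using eps d R by (simp add: \<eta>_def)
  have "eventually (\<lambda>h. dist ((\<rho> h - \<rho> 0) / (h - 0)) D < \<eta>) (at 0)"
    using tendstoD[OF lim \<eta>] .
  then obtain s where s: "s > 0" and sP: "\<And>h. h \<noteq> 0 \<Longrightarrow> dist h 0 < s \<Longrightarrow> \<bar>(\<rho> h - \<rho> 0) / h - D\<bar> < \<eta>"
    unfolding eventually_at by (auto simp: dist_real_def)
  have "0 < s / (R + 1)" using s R by simp
  from reals_Archimedean[OF this] obtain N where N: "inverse (real (Suc N)) < s / (R + 1)" by blast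
  show ?thesis
  proof (intro exI[of _ N] allI impI)
    fix n y assume n: "N \<le> n" and y: "\<bar>y\<bar> \<le> R"
    define h where "h = y / (real n + 1)"
    show "\<bar>(real n + 1) / D * (\<rho> (y / (real n + 1)) - \<rho> 0) - y\<bar> < \<epsilon>"
    proof (cases "y = 0")
      case True then show ?thesis using eps by simp
    next
      case False
      have hne: "h \<noteq> 0" using False by (simp add: h_def)
      have "\<bar>h\<bar> = \<bar>y\<bar> / (real n + 1)" by (simp add: h_def)
      also have "\<dots> \<le> R * inverse (real (Suc N))"
      proof -
        have "\<bar>y\<bar> / (real n + 1) \<le> R / (real n + 1)" using y by (simp add: divide_right_mono)
        also have "\<dots> \<le> R / (real N + 1)" using n R by (simp add: frac_le)
        finally show ?thesis by (simp add: field_simps)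
      qed
      also have "\<dots> < (R + 1) * (s / (R + 1))"
      proof -
        have "R * inverse (real (Suc N)) \<le> (R + 1) * inverse (real (Suc N))" by (simp add: mult_right_mono)
        also have "\<dots> < (R + 1) * (s / (R + 1))" using N R by (intro mult_strict_left_mono) auto
        finally show ?thesis .
      qed
      also have "\<dots> = s" using R by simp
      finally have "\<bar>h\<bar> < s" .
      then have q: "\<bar>(\<rho> h - \<rho> 0) / h - D\<bar> < \<eta>" using sP[OF hne] by (simp add: dist_real_def)
      have "(real n + 1) / D * (\<rho> h - \<rho> 0) - y = y / D * ((\<rho> h - \<rho> 0) / h - D)"
        using hne d(2) False by (simp add: h_def field_simps)
      then have "\<bar>(real n + 1) / D * (\<rho> h - \<rho> 0) - y\<bar> = \<bar>y\<bar> / \<bar>D\<bar> * \<bar>(\<rho> h - \<rho> 0) / h - D\<bar>"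
        by (simp add: abs_mult)
      also have "\<dots> \<le> R / \<bar>D\<bar> * \<eta>"
        using q y d(2) by (intro mult_mono divide_right_mono) auto
      also have "\<dots> = \<epsilon> * (R / (R + 1))" using d(2) R by (simp add: \<eta>_def)
      also have "\<dots> < \<epsilon>" using eps R by (simp add: mult_less_cancel_left1 divide_less_eq)
      finally show ?thesis by (simp add: h_def)
    qed
  qed
qed


fun hC :: "(complex \<Rightarrow> complex) \<Rightarrow> nat list \<Rightarrow> (nat \<Rightarrow> nat \<Rightarrow> nat \<Rightarrow> real) \<Rightarrow> (nat \<Rightarrow> nat \<Rightarrow> real)
             \<Rightarrow> nat \<Rightarrow> complex \<Rightarrow> nat \<Rightarrow> complex" where
  "hC F S A b 0 z = (\<lambda>i. if i = 0 then z else 0)"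
| "hC F S A b (Suc l) z = (\<lambda>i. F ((\<Sum>j<S ! l. of_real (A (Suc l) i j) * hC F S A b l z j) + of_real (b (Suc l) i)))"

lemma hC_real:
  assumes FR: "\<And>x. F (of_real x) = of_real (\<rho> x)"
  shows "hC F S A b l (of_real t) i = of_real (hidden \<rho> S A b l (line t) i)"
proof (induction l arbitrary: i)
  case 0 then show ?case by (simp add: line_def)
next
  case (Suc l)
  have "(\<Sum>j<S ! l. of_real (A (Suc l) i j) * hC F S A b l (of_real t) j) + of_real (b (Suc l) i)
      = (of_real ((\<Sum>j<S ! l. A (Suc l) i j * hidden \<rho> S A b l (line t) j) + b (Suc l) i) :: complex)"
    using Suc by simp
  then have "hC F S A b (Suc l) (of_real t) i = F (of_real ((\<Sum>j<S ! l. A (Suc l) i j * hidden \<rho> S A b l (line t) j) + b (Suc l) i))"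
    by (simp only: hC.simps)
  also have "\<dots> = of_real (\<rho> ((\<Sum>j<S ! l. A (Suc l) i j * hidden \<rho> S A b l (line t) j) + b (Suc l) i))"
    by (rule FR)
  finally show ?case by (simp only: hidden.simps)
qed

lemma hC_hol:
  assumes \<delta>: "\<delta> > 0" and hol: "F holomorphic_on strip \<delta>"
    and FR: "\<And>x. F (of_real x) = of_real (\<rho> x)"
  shows "\<exists>U. open U \<and> range complex_of_real \<subseteq> U \<and> (\<forall>i<S ! l. (\<lambda>z. hC F S A b l z i) holomorphic_on U)"
proof (induction l)
  case 0
  have "(\<lambda>z. hC F S A b 0 z i) holomorphic_on UNIV" for i
    by (cases "i = 0") (auto intro: holomorphic_intros)
  then show ?case by blast
next
  case (Suc l)
  then obtain U where U: "open U" "range complex_of_real \<subseteq> U"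
    and hU: "\<And>i. i < S ! l \<Longrightarrow> (\<lambda>z. hC F S A b l z i) holomorphic_on U" by blast
  define p where "p i z = (\<Sum>j<S ! l. of_real (A (Suc l) i j) * hC F S A b l z j) + of_real (b (Suc l) i)" for i z
  have hp: "p i holomorphic_on U" for i
    unfolding p_def by (intro holomorphic_intros hU) auto
  define U' where "U' = U \<inter> (\<Inter>i\<in>{..<S ! Suc l}. U \<inter> p i -` strip \<delta>)"
  have "open U'" unfolding U'_def
    using continuous_open_preimage[OF holomorphic_on_imp_continuous_on[OF hp] U(1) open_strip]
    by (intro open_Int open_INT U(1)) auto
  moreover have "range complex_of_real \<subseteq> U'"
  proof
    fix z assume "z \<in> range complex_of_real"
    then obtain t where z: "z = of_real t" by blast
    have "p i z \<in> strip \<delta>" for i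
    proof -
      have "p i z = of_real ((\<Sum>j<S ! l. A (Suc l) i j * hidden \<rho> S A b l (line t) j) + b (Suc l) i)"
        unfolding p_def z by (simp add: hC_real[where F=F and \<rho>=\<rho>, OF FR])
      then show ?thesis using \<delta> by (simp add: strip_def)
    qed
    then show "z \<in> U'" using U(2) z by (auto simp: U'_def)
  qed
  moreover have "(\<lambda>z. hC F S A b (Suc l) z i) holomorphic_on U'" if i: "i < S ! Suc l" for i
  proof -
    have "p i holomorphic_on U'" using hp by (rule holomorphic_on_subset) (auto simp: U'_def)
    moreover have "p i ` U' \<subseteq> strip \<delta>" using i by (auto simp: U'_def)
    ultimately have "(F \<circ> p i) holomorphic_on U'" by (rule holomorphic_on_compose_gen[OF _ hol])
    then show ?thesis by (simp add: p_def o_def)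
  qed
  ultimately show ?case by blast
qed

lemma realC_hol:
  assumes \<delta>: "\<delta> > 0" and hol: "F holomorphic_on strip \<delta>"
    and FR: "\<And>x. F (of_real x) = of_real (\<rho> x)"
  shows "\<exists>U RC. open U \<and> range complex_of_real \<subseteq> U \<and> RC holomorphic_on U \<and>
           (\<forall>t. RC (of_real t) = of_real (realization \<rho> S A b (line t)))"
proof -
  define L where "L = length S - 1"
  obtain U where U: "open U" "range complex_of_real \<subseteq> U"
    and hU: "\<And>i. i < S ! (L - 1) \<Longrightarrow> (\<lambda>z. hC F S A b (L - 1) z i) holomorphic_on U"
    using hC_hol[OF assms, of S "L - 1" A b] by blast
  define RC where "RC z = (\<Sum>j<S ! (L - 1). of_real (A L 0 j) * hC F S A b (L - 1) z j) + of_real (b L 0)" for z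
  have "RC holomorphic_on U" unfolding RC_def by (intro holomorphic_intros hU) auto
  moreover have "RC (of_real t) = of_real (realization \<rho> S A b (line t))" for t
    unfolding RC_def realization_def Let_def L_def[symmetric] by (simp add: hC_real[where F=F and \<rho>=\<rho>, OF FR])
  ultimately show ?thesis using U by blast
qed

lemma realization_bounded:
  fixes \<rho> :: "real \<Rightarrow> real"
  assumes M: "\<And>x. \<bar>\<rho> x\<bar> \<le> M" and len: "3 \<le> length S"
  shows "\<exists>K. \<forall>x. \<bar>realization \<rho> S A b x\<bar> \<le> K"
proof -
  define L where "L = length S - 1"
  obtain k where k: "L - 1 = Suc k" using len by (intro that[of "length S - 3"]) (simp add: L_def)
  have hb: "\<bar>hidden \<rho> S A b (L - 1) x j\<bar> \<le> M" for x j unfolding k using M by simp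
  define K where "K = (\<Sum>j<S ! (L - 1). \<bar>A L 0 j\<bar> * M) + \<bar>b L 0\<bar>"
  have "\<bar>realization \<rho> S A b x\<bar> \<le> K" for x
  proof -
    have "\<bar>realization \<rho> S A b x\<bar> \<le> \<bar>\<Sum>j<S ! (L - 1). A L 0 j * hidden \<rho> S A b (L - 1) x j\<bar> + \<bar>b L 0\<bar>"
      unfolding realization_def Let_def L_def[symmetric] by (rule abs_triangle_ineq)
    also have "\<bar>\<Sum>j<S ! (L - 1). A L 0 j * hidden \<rho> S A b (L - 1) x j\<bar>
        \<le> (\<Sum>j<S ! (L - 1). \<bar>A L 0 j * hidden \<rho> S A b (L - 1) x j\<bar>)" by (rule sum_abs)
    also have "\<dots> \<le> (\<Sum>j<S ! (L - 1). \<bar>A L 0 j\<bar> * M)"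
      by (intro sum_mono) (simp only: abs_mult mult_left_mono[OF hb abs_ge_zero])
    finally show ?thesis by (simp add: K_def)
  qed
  then show ?thesis by blast
qed


lemma iterate_uniform:
  fixes T :: "nat \<Rightarrow> real \<Rightarrow> real" and Z :: "nat \<Rightarrow> nat \<Rightarrow> real \<Rightarrow> real"
  assumes T: "\<And>R \<epsilon>. R \<ge> 0 \<Longrightarrow> \<epsilon> > 0 \<Longrightarrow> \<exists>N. \<forall>n\<ge>N. \<forall>y. \<bar>y\<bar> \<le> R \<longrightarrow> \<bar>T n y - y\<bar> < \<epsilon>"
    and Z0: "\<And>n t. Z n 0 t = t" and ZS: "\<And>n k t. Z n (Suc k) t = T n (Z n k t)"
    and B: "B \<ge> 0"
  shows "\<epsilon> > 0 \<Longrightarrow> \<exists>N. \<forall>n\<ge>N. \<forall>t. \<bar>t\<bar> \<le> B \<longrightarrow> \<bar>Z n k t - t\<bar> < \<epsilon>"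
proof (induction k arbitrary: \<epsilon>)
  case 0 then show ?case by (auto simp: Z0)
next
  case (Suc k)
  have "min (\<epsilon>/2) 1 > 0" using Suc.prems by simp
  from Suc.IH[OF this] obtain N1 where N1: "\<And>n t. N1 \<le> n \<Longrightarrow> \<bar>t\<bar> \<le> B \<Longrightarrow> \<bar>Z n k t - t\<bar> < min (\<epsilon>/2) 1"
    by blast
  have "B + 1 \<ge> 0" "\<epsilon>/2 > 0" using B Suc.prems by auto
  from T[OF this] obtain N2 where N2: "\<And>n y. N2 \<le> n \<Longrightarrow> \<bar>y\<bar> \<le> B + 1 \<Longrightarrow> \<bar>T n y - y\<bar> < \<epsilon>/2"
    by blast
  show ?case
  proof (intro exI[of _ "max N1 N2"] allI impI)
    fix n t assume n: "max N1 N2 \<le> n" and t: "\<bar>t\<bar> \<le> B"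
    have 1: "\<bar>Z n k t - t\<bar> < min (\<epsilon>/2) 1" using N1 n t by simp
    then have "\<bar>Z n k t\<bar> \<le> B + 1" using t by linarith
    then have 2: "\<bar>T n (Z n k t) - Z n k t\<bar> < \<epsilon>/2" using N2 n by simp
    have 3: "\<bar>Z n k t - t\<bar> < \<epsilon>/2" using 1 by simp
    have "\<bar>T n (Z n k t) - t\<bar> \<le> \<bar>T n (Z n k t) - Z n k t\<bar> + \<bar>Z n k t - t\<bar>"
      by arith
    then show "\<bar>Z n (Suc k) t - t\<bar> < \<epsilon>" using 2 3 unfolding ZS by linarith
  qed
qed

lemma islimpt_real_interval: "B > 0 \<Longrightarrow> (0::complex) islimpt (complex_of_real ` {-B..B})"
  unfolding islimpt_approachable
proof (intro allI impI)
  fix e :: real assume B: "B > 0" and e: "e > 0"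
  define x where "x = min B (e/2)"
  have x: "0 < x" "x \<le> B" "x < e" using B e by (auto simp: x_def)
  show "\<exists>x'\<in>complex_of_real ` {-B..B}. x' \<noteq> 0 \<and> dist x' 0 < e"
    by (rule bexI[of _ "of_real x"]) (use x in auto)
qed

lemma analytic_family_not_closed:
  fixes \<rho> :: "real \<Rightarrow> real"
  assumes M: "\<And>x. \<bar>\<rho> x\<bar> \<le> M"
    and d: "(\<rho> has_real_derivative D) (at 0)" "D \<noteq> 0"
    and \<delta>: "\<delta> > 0" and hol: "F holomorphic_on strip \<delta>"
    and FR: "\<And>x. F (of_real x) = of_real (\<rho> x)"
    and S: "scalar_arch S" and B: "B > 0"
  shows "RNN_not_closed \<rho> S (cube (S ! 0) B)"
proof -
  define d0 where "d0 = S ! 0"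
  have len: "3 \<le> length S" using S by (simp add: scalar_arch_def)
  have d1: "1 \<le> d0" using S len unfolding scalar_arch_def d0_def
    by (metis One_nat_def less_le_trans numeral_3_eq_3 zero_less_Suc)
  define T where "T n y = (real n + 1) / D * (\<rho> (y / (real n + 1)) - \<rho> 0)" for n y
  define Z where "Z n = zc \<rho> (\<lambda>_. 1 / (real n + 1)) (\<lambda>_. 0) (\<lambda>_. (real n + 1) / D) (\<lambda>_. - ((real n + 1) * \<rho> 0 / D))" for n
  have Z0: "Z n 0 t = t" for n t by (simp add: Z_def)
  have ZS: "Z n (Suc k) t = T n (Z n k t)" for n k t
    using d(2) by (simp add: Z_def T_def field_simps)
  define K where "K = length S - 2"
  define g where "g n x = Z n K (x 0)" for n and x :: "nat \<Rightarrow> real"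
  define f where "f x = x 0" for x :: "nat \<Rightarrow> real"
  have inR: "in_RNN \<rho> S (cube d0 B) (g n)" for n
  proof -
    have "realization \<rho> S (netA (length S - 1) (\<lambda>_. 1 / (real n + 1)) (\<lambda>_. (real n + 1) / D) 0 0)
       (netB (length S - 1) (\<lambda>_. 1 / (real n + 1)) (\<lambda>_. 0) (\<lambda>_. - ((real n + 1) * \<rho> 0 / D)) 0 0) x = g n x" for x
      using realization_chain[OF S, of 0] by (simp add: g_def Z_def K_def)
    then show ?thesis unfolding in_RNN_def by (metis (no_types))
  qed
  have fc: "continuous_on (cube d0 B) f"
    unfolding f_def by (rule continuous_on_subset[OF continuous_on_product_coordinates]) auto
  have ul: "uniform_limit (cube d0 B) g f sequentially"
    unfolding uniform_limit_iff
  proof (intro allI impI)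
    fix \<epsilon> :: real assume eps: "\<epsilon> > 0"
    have Tu: "\<exists>N. \<forall>n\<ge>N. \<forall>y. \<bar>y\<bar> \<le> R \<longrightarrow> \<bar>T n y - y\<bar> < \<epsilon>'" if "R \<ge> 0" "\<epsilon>' > 0" for R \<epsilon>'
      using T_uniform[OF d that(2) that(1)] by (simp add: T_def)
    obtain N where N: "\<And>n t. N \<le> n \<Longrightarrow> \<bar>t\<bar> \<le> B \<Longrightarrow> \<bar>Z n K t - t\<bar> < \<epsilon>"
      using iterate_uniform[OF Tu Z0 ZS _ eps, of B K] B by auto
    show "\<forall>\<^sub>F n in sequentially. \<forall>x\<in>cube d0 B. dist (g n x) (f x) < \<epsilon>"
      unfolding eventually_sequentially
    proof (intro exI[of _ N] allI impI ballI)
      fix n x assume n: "N \<le> n" and x: "x \<in> cube d0 B"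
      have "\<bar>x 0\<bar> \<le> B" using x d1 by (auto simp: cube_def)
      then show "dist (g n x) (f x) < \<epsilon>" using N[OF n] by (simp add: g_def f_def dist_real_def)
    qed
  qed
  have notin: "\<not> in_RNN \<rho> S (cube d0 B) f"
  proof
    assume "in_RNN \<rho> S (cube d0 B) f"
    then obtain A b where Ab: "\<And>x. x \<in> cube d0 B \<Longrightarrow> f x = realization \<rho> S A b x"
      unfolding in_RNN_def by blast
    define G where "G t = realization \<rho> S A b (line t)" for t
    have Gt: "G t = t" if "\<bar>t\<bar> \<le> B" for t
      using Ab[OF line_cube[OF d1 that]] by (simp add: G_def f_def)
    obtain U RC where U: "open U" "range complex_of_real \<subseteq> U" and hRC: "RC holomorphic_on U"
      and RCr: "\<And>t. RC (of_real t) = of_real (G t)"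
      using realC_hol[OF \<delta> hol FR, of S A b] unfolding G_def by blast
    define C where "C = connected_component_set U 0"
    have oC: "open C" unfolding C_def by (rule open_connected_component[OF U(1)])
    have cC: "connected C" unfolding C_def by simp
    have RC: "range complex_of_real \<subseteq> C" unfolding C_def
    proof (rule connected_component_maximal)
      show "0 \<in> range complex_of_real" by (metis of_real_0 rangeI)
      show "connected (range complex_of_real)"
        by (rule connected_continuous_image) (auto intro: continuous_intros)
    qed (use U in auto)
    obtain K0 where K0: "\<And>t. \<bar>G t\<bar> \<le> K0" using realization_bounded[of \<rho> M, OF M len, of A b] unfolding G_def by blast
    have "C \<subseteq> U" by (simp add: C_def connected_component_subset)
    note hRC' = holomorphic_on_subset[OF hRC this]
    have "0 \<in> C" using RC by (simp add: subset_eq) (metis of_real_0)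
    have "RC (of_real (K0 + 1)) - of_real (K0 + 1) = 0"
    proof (rule analytic_continuation[of "\<lambda>z. RC z - z" C "complex_of_real ` {-B..B}" 0 "of_real (K0 + 1)"])
      show "(\<lambda>z. RC z - z) holomorphic_on C"
        by (intro holomorphic_intros hRC')
      show "complex_of_real ` {- B..B} \<subseteq> C" using RC by auto
      show "0 \<in> C" by fact
      show "0 islimpt complex_of_real ` {- B..B}" by (rule islimpt_real_interval[OF B])
      show "RC z - z = 0" if zin: "z \<in> complex_of_real ` {- B..B}" for z
      proof -
        obtain t where t: "z = of_real t" "t \<in> {-B..B}" using zin by blast
        then have "\<bar>t\<bar> \<le> B" by auto
        then have "G t = t" by (rule Gt)
        then show ?thesis using t(1) RCr[of t] by simp
      qed
      show "of_real (K0 + 1) \<in> C" using RC by (simp only: subset_eq) blast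
    qed (use oC cC in auto)
    then have "complex_of_real (G (K0 + 1)) = complex_of_real (K0 + 1)" using RCr[of "K0 + 1"] by simp
    then have "G (K0 + 1) = K0 + 1" by (simp only: of_real_eq_iff)
    then show False using K0[of "K0 + 1"] by simp
  qed
  show ?thesis unfolding RNN_not_closed_def d0_def[symmetric]
    using inR fc ul notin by blast
qed


lemma iterate_uniform2:
  fixes T :: "nat \<Rightarrow> real \<Rightarrow> real" and Z :: "nat \<Rightarrow> nat \<Rightarrow> real \<Rightarrow> real"
  assumes T: "\<And>R \<epsilon>. R \<ge> 0 \<Longrightarrow> \<epsilon> > 0 \<Longrightarrow> \<exists>N. \<forall>n\<ge>N. \<forall>y. \<bar>y\<bar> \<le> R \<longrightarrow> \<bar>T n y - y\<bar> < \<epsilon>"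
    and Z0: "\<And>\<epsilon>. \<epsilon> > 0 \<Longrightarrow> \<exists>N. \<forall>n\<ge>N. \<forall>t\<in>X. \<bar>Z n 0 t - F t\<bar> < \<epsilon>"
    and ZS: "\<And>n k t. Z n (Suc k) t = T n (Z n k t)"
    and R0: "R0 \<ge> 0" "\<And>t. t \<in> X \<Longrightarrow> \<bar>F t\<bar> \<le> R0"
  shows "\<epsilon> > 0 \<Longrightarrow> \<exists>N. \<forall>n\<ge>N. \<forall>t\<in>X. \<bar>Z n k t - F t\<bar> < \<epsilon>"
proof (induction k arbitrary: \<epsilon>)
  case 0 then show ?case by (rule Z0)
next
  case (Suc k)
  have "min (\<epsilon>/2) 1 > 0" using Suc.prems by simp
  from Suc.IH[OF this] obtain N1 where N1: "\<And>n t. N1 \<le> n \<Longrightarrow> t \<in> X \<Longrightarrow> \<bar>Z n k t - F t\<bar> < min (\<epsilon>/2) 1"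
    by blast
  have "R0 + 1 \<ge> 0" "\<epsilon>/2 > 0" using R0 Suc.prems by auto
  from T[OF this] obtain N2 where N2: "\<And>n y. N2 \<le> n \<Longrightarrow> \<bar>y\<bar> \<le> R0 + 1 \<Longrightarrow> \<bar>T n y - y\<bar> < \<epsilon>/2"
    by blast
  show ?case
  proof (intro exI[of _ "max N1 N2"] allI impI ballI)
    fix n t assume n: "max N1 N2 \<le> n" and t: "t \<in> X"
    have 1: "\<bar>Z n k t - F t\<bar> < min (\<epsilon>/2) 1" using N1 n t by simp
    have "\<bar>F t\<bar> \<le> R0" using R0(2) t .
    then have "\<bar>Z n k t\<bar> \<le> R0 + 1" using 1 by linarith
    then have 2: "\<bar>T n (Z n k t) - Z n k t\<bar> < \<epsilon>/2" using N2 n by simp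
    have 3: "\<bar>Z n k t - F t\<bar> < \<epsilon>/2" using 1 by simp
    have "\<bar>T n (Z n k t) - F t\<bar> \<le> \<bar>T n (Z n k t) - Z n k t\<bar> + \<bar>Z n k t - F t\<bar>"
      by arith
    then show "\<bar>Z n (Suc k) t - F t\<bar> < \<epsilon>" using 2 3 unfolding ZS by linarith
  qed
qed

lemma one_plus_exp_pos [simp]: "0 < 1 + exp (x::real)"
  by (simp add: add_pos_pos)

lemma one_plus_exp_ne [simp]: "1 + exp (x::real) \<noteq> 0"
  using one_plus_exp_pos[of x] by linarith

lemma softplus_deriv: "(softplus has_real_derivative exp x / (1 + exp x)) (at x)"
  unfolding softplus_def[abs_def]
  by (auto intro!: derivative_eq_intros simp: add_pos_pos)

lemma softplus_Ck1: "Ck 1 softplus"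
  unfolding One_nat_def Ck_Suc Ck_0
  by (intro exI[of _ "\<lambda>x. exp x / (1 + exp x)"] conjI allI softplus_deriv)
     (auto intro!: continuous_intros simp: add_pos_pos)

lemma softplus_C1: "C1 softplus"
  unfolding C1_def
  by (intro exI[of _ "\<lambda>x. exp x / (1 + exp x)"] conjI allI softplus_deriv)
     (auto intro!: continuous_intros simp: add_pos_pos)

lemma softplus_bounds: "max 0 y \<le> softplus y \<and> softplus y \<le> max 0 y + 1"
proof -
  have pos: "0 < 1 + exp y" by (simp add: add_pos_pos)
  have "exp (max 0 y) \<le> 1 + exp y" by (cases "0 \<le> y") auto
  then have lo: "max 0 y \<le> softplus y"
    unfolding softplus_def using pos by (subst ln_ge_iff) auto
  have "1 + exp y \<le> 2 * exp (max 0 y)" by (cases "0 \<le> y") auto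
  also have "\<dots> \<le> exp 1 * exp (max 0 y)"
    using exp_ge_add_one_self[of 1] by (intro mult_right_mono) auto
  also have "\<dots> = exp (max 0 y + 1)" by (simp add: exp_add)
  finally have "ln (1 + exp y) \<le> ln (exp (max 0 y + 1))"
    using pos by (subst ln_le_cancel_iff) auto
  then have "softplus y \<le> max 0 y + 1" by (simp add: softplus_def)
  then show ?thesis using lo by simp
qed

lemma softplus_id: "0 \<le> softplus u - u \<and> softplus u - u \<le> exp (- u)"
proof -
  have "softplus u - u = ln (1 + exp (- u))"
  proof -
    have "1 + exp u = exp u * (1 + exp (- u))" by (simp add: field_simps exp_minus)
    then have "ln (1 + exp u) = u + ln (1 + exp (- u))"
      by (simp add: ln_mult add_pos_pos)
    then show ?thesis by (simp add: softplus_def)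
  qed
  moreover have "ln (1 + exp (- u)) \<le> exp (- u)" by (rule ln_add_one_self_le_self) simp
  moreover have "0 \<le> ln (1 + exp (- u))" by simp
  ultimately show ?thesis by simp
qed

lemma softplus_approx_hom: "approx_homogeneous 1 0 softplus"
  unfolding approx_homogeneous_def
proof (intro exI[of _ 1] conjI allI impI)
  fix x :: real
  show "0 \<le> x \<Longrightarrow> \<bar>softplus x - x ^ 1\<bar> \<le> 1" using softplus_bounds[of x] by auto
  show "x \<le> 0 \<Longrightarrow> \<bar>softplus x - x ^ 0\<bar> \<le> 1" using softplus_bounds[of x] by auto
qed simp


lemma softplus_not_closed:
  assumes S: "scalar_arch S" and B: "B > 0"
  shows "RNN_not_closed softplus S (cube (S ! 0) B)"
proof -
  define d0 where "d0 = S ! 0"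
  have len: "3 \<le> length S" using S by (simp add: scalar_arch_def)
  have d1: "1 \<le> d0" using S len unfolding scalar_arch_def d0_def
    by (metis One_nat_def less_le_trans numeral_3_eq_3 zero_less_Suc)
  define T where "T n y = softplus (y + (real n + 1)) - (real n + 1)" for n y
  define \<alpha> where "\<alpha> n (l::nat) = (if l = 1 then - (real n + 1) else 1)" for n l
  define \<beta> where "\<beta> n (l::nat) = (if l = 1 then 0 else real n + 1)" for n l
  define \<kappa> where "\<kappa> n (l::nat) = (if l = 1 then 1 / (real n + 1) else 1)" for n l
  define \<mu> where "\<mu> n (l::nat) = (if l = 1 then 0 else - (real n + 1))" for n l
  define Z where "Z n k = zc softplus (\<alpha> n) (\<beta> n) (\<kappa> n) (\<mu> n) (Suc k)" for n k
  have Z0: "Z n 0 t = softplus (- (real n + 1) * t) / (real n + 1)" for n t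
    by (simp add: Z_def \<alpha>_def \<beta>_def \<kappa>_def \<mu>_def)
  have ZS: "Z n (Suc k) t = T n (Z n k t)" for n k t
    by (simp add: Z_def T_def \<alpha>_def \<beta>_def \<kappa>_def \<mu>_def)
  define K where "K = length S - 3"
  define g where "g n x = Z n K (x 0)" for n and x :: "nat \<Rightarrow> real"
  define F where "F t = max 0 (- t)" for t :: real
  define f where "f x = F (x 0)" for x :: "nat \<Rightarrow> real"
  have inR: "in_RNN softplus S (cube d0 B) (g n)" for n
  proof -
    have "length S - 2 = Suc K" using len by (simp add: K_def)
    then have "realization softplus S (netA (length S - 1) (\<alpha> n) (\<kappa> n) 0 0)
       (netB (length S - 1) (\<alpha> n) (\<beta> n) (\<mu> n) 0 0) x = g n x" for x
      using realization_chain[OF S, of 0 softplus "\<alpha> n" "\<kappa> n" 0 "\<beta> n" "\<mu> n" 0 x]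
      by (simp add: g_def Z_def)
    then show ?thesis unfolding in_RNN_def by (metis (no_types))
  qed
  have fc: "continuous_on (cube d0 B) f"
  proof -
    have "continuous_on UNIV (\<lambda>x::nat \<Rightarrow> real. x 0)" by simp
    then have "continuous_on UNIV f" unfolding f_def F_def by (intro continuous_intros) auto
    then show ?thesis by (rule continuous_on_subset) auto
  qed
  have Tu: "\<exists>N. \<forall>n\<ge>N. \<forall>y. \<bar>y\<bar> \<le> R \<longrightarrow> \<bar>T n y - y\<bar> < \<epsilon>" if R: "R \<ge> 0" and eps: "\<epsilon> > 0" for R \<epsilon>
  proof -
    obtain N :: nat where N: "R - ln \<epsilon> < real N" using reals_Archimedean2 by blast
    show ?thesis
    proof (intro exI[of _ N] allI impI)
      fix n y assume n: "N \<le> n" and y: "\<bar>y\<bar> \<le> R"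
      have b: "0 \<le> T n y - y" "T n y - y \<le> exp (- (y + (real n + 1)))"
        using softplus_id[of "y + (real n + 1)"] by (auto simp: T_def)
      have "- (y + (real n + 1)) < ln \<epsilon>" using N n y by linarith
      then have "exp (- (y + (real n + 1))) < \<epsilon>" using eps by (metis exp_less_cancel_iff exp_ln)
      then show "\<bar>T n y - y\<bar> < \<epsilon>" using b by linarith
    qed
  qed
  have Z0u: "\<exists>N. \<forall>n\<ge>N. \<forall>t\<in>{-B..B}. \<bar>Z n 0 t - F t\<bar> < \<epsilon>" if eps: "\<epsilon> > 0" for \<epsilon>
  proof -
    obtain N where N: "inverse (real (Suc N)) < \<epsilon>" using reals_Archimedean[OF eps] by blast
    show ?thesis
    proof (intro exI[of _ N] allI impI ballI)
      fix n t assume n: "N \<le> n"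
      define y where "y = - (real n + 1) * t"
      have b: "max 0 y \<le> softplus y" "softplus y \<le> max 0 y + 1" using softplus_bounds[of y] by auto
      have "max 0 y = (real n + 1) * F t"
      proof (cases "t \<le> 0")
        case True
        then have "0 \<le> y" by (simp add: y_def mult_nonpos_nonpos)
        then show ?thesis using True by (simp add: y_def F_def algebra_simps)
      next
        case False
        then have "y \<le> 0" by (simp add: y_def mult_nonpos_nonneg)
        then show ?thesis using False by (simp add: F_def)
      qed
      then have "\<bar>Z n 0 t - F t\<bar> = \<bar>softplus y - max 0 y\<bar> / (real n + 1)"
        by (simp add: Z0 y_def field_simps)
      also have "\<dots> \<le> 1 / (real n + 1)" using b by (intro divide_right_mono) auto
      also have "\<dots> \<le> inverse (real (Suc N))" using n by (simp add: divide_simps)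
      finally show "\<bar>Z n 0 t - F t\<bar> < \<epsilon>" using N by linarith
    qed
  qed
  have ul: "uniform_limit (cube d0 B) g f sequentially"
    unfolding uniform_limit_iff
  proof (intro allI impI)
    fix \<epsilon> :: real assume eps: "\<epsilon> > 0"
    have R0: "B \<ge> 0" "\<And>t. t \<in> {-B..B} \<Longrightarrow> \<bar>F t\<bar> \<le> B" using B by (auto simp: F_def)
    obtain N where N: "\<And>n t. N \<le> n \<Longrightarrow> t \<in> {-B..B} \<Longrightarrow> \<bar>Z n K t - F t\<bar> < \<epsilon>"
      using iterate_uniform2[OF Tu Z0u ZS R0 eps, of K] by blast
    show "\<forall>\<^sub>F n in sequentially. \<forall>x\<in>cube d0 B. dist (g n x) (f x) < \<epsilon>"
      unfolding eventually_sequentially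
    proof (intro exI[of _ N] allI impI ballI)
      fix n x assume n: "N \<le> n" and x: "x \<in> cube d0 B"
      have "\<bar>x 0\<bar> \<le> B" using x d1 by (auto simp: cube_def)
      then have "x 0 \<in> {-B..B}" by auto
      then show "dist (g n x) (f x) < \<epsilon>" using N[OF n] by (simp add: g_def f_def dist_real_def)
    qed
  qed
  have notin: "\<not> in_RNN softplus S (cube d0 B) f"
  proof
    assume "in_RNN softplus S (cube d0 B) f"
    then obtain A b where Ab: "\<And>x. x \<in> cube d0 B \<Longrightarrow> f x = realization softplus S A b x"
      unfolding in_RNN_def by blast
    define G where "G t = realization softplus S A b (line t)" for t
    have GCk: "Ck 1 G" unfolding G_def by (rule realization_Ck[OF softplus_Ck1])
    have Gt: "G t = max 0 (- t)" if "\<bar>t\<bar> \<le> B" for t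
      using Ab[OF line_cube[OF d1 that]] by (simp add: G_def f_def F_def)
    have G0: "G 0 = 0" using Gt[of 0] B by simp
    show False
    proof (rule obstruction1[OF GCk _ B, of 1])
      show "G t = G 0" if "0 \<le> t" "t < B" for t using Gt[of t] that G0 by simp
      show "1 * \<bar>t\<bar> ^ 1 \<le> \<bar>G t - G 0\<bar>" if "- B < t" "t < 0" for t using Gt[of t] that G0 by simp
    qed auto
  qed
  show ?thesis unfolding RNN_not_closed_def d0_def[symmetric]
    using inR fc ul notin by blast
qed


lemma piecewise_deriv:
  fixes f1 f2 f1' f2' :: "real \<Rightarrow> real"
  assumes d1: "\<And>x. 0 \<le> x \<Longrightarrow> (f1 has_real_derivative f1' x) (at x)"
    and d2: "\<And>x. x \<le> 0 \<Longrightarrow> (f2 has_real_derivative f2' x) (at x)"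
    and e0: "f1 0 = f2 0" and e1: "f1' 0 = f2' 0"
  shows "((\<lambda>x. if 0 \<le> x then f1 x else f2 x) has_real_derivative (if 0 \<le> x then f1' x else f2' x)) (at x)"
proof -
  consider "x > 0" | "x < 0" | "x = 0" by linarith
  then show ?thesis
  proof cases
    case 1
    have "((\<lambda>x. if 0 \<le> x then f1 x else f2 x) has_real_derivative f1' x) (at x)"
      by (rule has_field_derivative_transform_within_open[OF d1[of x, OF less_imp_le[OF 1]], of "{0<..}"]) (use 1 in auto)
    then show ?thesis using 1 by simp
  next
    case 2
    have "((\<lambda>x. if 0 \<le> x then f1 x else f2 x) has_real_derivative f2' x) (at x)"
      by (rule has_field_derivative_transform_within_open[OF d2[of x, OF less_imp_le[OF 2]], of "{..<0}"]) (use 2 in auto)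
    then show ?thesis using 2 by simp
  next
    case 3
    let ?g = "\<lambda>x. if 0 \<le> x then f1 x else f2 x"
    have l1: "((\<lambda>y. (f1 y - f1 0) / (y - 0)) \<longlongrightarrow> f1' 0) (at 0)"
      using d1[of 0] by (simp add: has_field_derivative_iff)
    have l2: "((\<lambda>y. (f2 y - f2 0) / (y - 0)) \<longlongrightarrow> f2' 0) (at 0)"
      using d2[of 0] by (simp add: has_field_derivative_iff)
    have "((\<lambda>y. (?g y - ?g 0) / (y - 0)) \<longlongrightarrow> f1' 0) (at 0)"
    proof (rule filterlim_split_at)
      have la: "((\<lambda>y. (f2 y - f2 0) / (y - 0)) \<longlongrightarrow> f1' 0) (at_left 0)"
        using l2 e1 by (simp add: filterlim_at_split)
      have eva: "eventually (\<lambda>y. (f2 y - f2 0) / (y - 0) = (?g y - ?g 0) / (y - 0)) (at_left (0::real))"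
        unfolding eventually_at_left_field
      proof (intro exI[of _ "-1"] conjI allI impI)
        fix y :: real assume "-1 < y" "y < 0"
        then show "(f2 y - f2 0) / (y - 0) = (?g y - ?g 0) / (y - 0)" using e0 by simp
      qed simp
      show "((\<lambda>y. (?g y - ?g 0) / (y - 0)) \<longlongrightarrow> f1' 0) (at_left 0)"
        using tendsto_cong[OF eva] la by (rule iffD1)
      have lb: "((\<lambda>y. (f1 y - f1 0) / (y - 0)) \<longlongrightarrow> f1' 0) (at_right 0)"
        using l1 by (simp add: filterlim_at_split)
      have evb: "eventually (\<lambda>y. (f1 y - f1 0) / (y - 0) = (?g y - ?g 0) / (y - 0)) (at_right (0::real))"
        unfolding eventually_at_right_field
      proof (intro exI[of _ 1] conjI allI impI)
        fix y :: real assume "0 < y" "y < 1"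
        then show "(f1 y - f1 0) / (y - 0) = (?g y - ?g 0) / (y - 0)" by simp
      qed simp
      show "((\<lambda>y. (?g y - ?g 0) / (y - 0)) \<longlongrightarrow> f1' 0) (at_right 0)"
        using tendsto_cong[OF evb] lb by (rule iffD1)
    qed
    then show ?thesis using 3 by (simp add: has_field_derivative_iff)
  qed
qed

lemma C1_of_Ck: "Ck m f \<Longrightarrow> 1 \<le> m \<Longrightarrow> C1 f"
proof -
  assume "Ck m f" "1 \<le> m"
  then have "Ck (Suc 0) f" using Ck_mono_le by simp
  then obtain f' where "\<forall>x. (f has_real_derivative f' x) (at x)" "Ck 0 f'" by (auto simp: Ck_Suc)
  then show "C1 f" unfolding C1_def Ck_0 by blast
qed

lemma relu_pow_if: "1 \<le> k \<Longrightarrow> relu_pow k x = (if 0 \<le> x then x ^ k else 0)"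
  by (simp add: relu_pow_def max_def)

lemma relu_pow_deriv:
  assumes k: "1 \<le> k"
  shows "(relu_pow (Suc k) has_real_derivative real (Suc k) * relu_pow k x) (at x)"
proof -
  have eq: "relu_pow (Suc k) = (\<lambda>x. if 0 \<le> x then x ^ Suc k else 0)"
    by (rule ext) (simp add: relu_pow_if)
  have "((\<lambda>x. if 0 \<le> x then x ^ Suc k else 0) has_real_derivative
      (if 0 \<le> x then real (Suc k) * x ^ k else 0)) (at x)"
  proof (rule piecewise_deriv)
    show "((\<lambda>x. x ^ Suc k) has_real_derivative real (Suc k) * x ^ k) (at x)" for x
      using DERIV_pow[of "Suc k" x] by simp
    show "((\<lambda>x. 0) has_real_derivative 0) (at x)" for x :: real by simp
    show "real (Suc k) * 0 ^ k = 0" using k by simp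
  qed simp
  moreover have eq2: "real (Suc k) * relu_pow k x = (if 0 \<le> x then real (Suc k) * x ^ k else 0)"
    using k by (simp add: relu_pow_if)
  ultimately show ?thesis unfolding eq eq2 by blast
qed

lemma relu_pow_cont: "continuous_on UNIV (relu_pow k)"
  unfolding relu_pow_def[abs_def] by (intro continuous_intros)

lemma relu_pow_Ck: "1 \<le> k \<Longrightarrow> Ck (k - 1) (relu_pow k)"
proof (induction k rule: dec_induct)
  case base then show ?case by (simp add: Ck_0 relu_pow_cont)
next
  case (step k)
  have ck1: "Ck (k - 1) (\<lambda>x. real (Suc k) * relu_pow k x)" using step by (intro Ck_cmult)
  moreover have "Suc k - 1 = Suc (k - 1)" using step by simp
  then have "Ck (Suc (k - 1)) (relu_pow (Suc k))"
    unfolding Ck_Suc using relu_pow_deriv[OF step(1)] ck1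
    by (intro exI[of _ "\<lambda>x. real (Suc k) * relu_pow k x"]) blast
  then show ?case using \<open>Suc k - 1 = Suc (k - 1)\<close> by simp
qed

lemma relu_pow_facts:
  assumes k: "2 \<le> k"
  shows "C1 (relu_pow k) \<and> \<not> Cinf (relu_pow k)
     \<and> (\<forall>B>0. \<forall>S. scalar_arch S \<and> 2 \<le> S ! (length S - 2) \<longrightarrow> RNN_not_closed (relu_pow k) S (cube (S ! 0) B))"
proof -
  define j where "j = k - 1"
  have j: "k = Suc j" "1 \<le> j" using k by (auto simp: j_def)
  define r' where "r' x = real (Suc j) * relu_pow j x" for x
  have der: "\<And>x. (relu_pow k has_real_derivative r' x) (at x)"
    unfolding r'_def j(1) by (rule relu_pow_deriv[OF j(2)])
  have Ck: "Ck j (relu_pow k)" using relu_pow_Ck[of k] j by simp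
  have cont: "continuous_on UNIV r'" unfolding r'_def by (intro continuous_intros relu_pow_cont)
  have posr: "0 \<le> relu_pow k y \<and> 0 < r' y" if "1 \<le> y" for y
  proof -
    have "max 0 y = y" using that by simp
    then show ?thesis using that by (simp add: relu_pow_def r'_def)
  qed
  have rneg: "relu_pow j x = 0" if "x \<le> 0" for x
  proof -
    have "max 0 x = 0" using that by simp
    then show ?thesis using j by (simp add: relu_pow_def)
  qed
  have rpos: "relu_pow j x = x ^ j" if "0 \<le> x" for x
  proof -
    have "max 0 x = x" using that by simp
    then show ?thesis by (simp add: relu_pow_def)
  qed
  have obs: "obsA (\<lambda>u. r' (-1 * u)) j"
    unfolding obsA_def
  proof (intro exI[of _ 1] exI[of _ 1] conjI allI impI)
    fix u :: real
    show "0 \<le> u \<and> u < 1 \<Longrightarrow> r' (-1 * u) = r' (-1 * 0)"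
      using rneg[of "-1 * u"] rneg[of 0] by (simp add: r'_def)
    assume u: "-1 < u \<and> u < 0"
    then have "r' (-1 * u) = real (Suc j) * \<bar>u\<bar> ^ j" using rpos[of "-u"] by (simp add: r'_def)
    moreover have "r' (-1 * 0) = 0" using rneg[of 0] by (simp add: r'_def)
    moreover have "1 * \<bar>u\<bar> ^ j \<le> real (Suc j) * \<bar>u\<bar> ^ j" by (intro mult_right_mono) auto
    ultimately show "1 * \<bar>u\<bar> ^ j \<le> \<bar>r' (-1 * u) - r' (-1 * 0)\<bar>" by simp
  qed auto
  have "C1 (relu_pow k)" using C1_of_Ck[OF Ck j(2)] .
  moreover have "\<not> Cinf (relu_pow k)" by (rule not_Cinf[OF der j(2) disjI1[OF obs]])
  moreover have "\<forall>B>0. \<forall>S. scalar_arch S \<and> 2 \<le> S ! (length S - 2) \<longrightarrow> RNN_not_closed (relu_pow k) S (cube (S ! 0) B)"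
  proof (intro allI impI)
    fix B :: real and S assume B: "B > 0" and S: "scalar_arch S \<and> 2 \<le> S ! (length S - 2)"
    have sg: "(-1::real) = 1 \<or> (-1::real) = -1" by simp
    from S have S1: "scalar_arch S" and S2: "2 \<le> S ! (length S - 2)" by auto
    show "RNN_not_closed (relu_pow k) S (cube (S ! 0) B)"
      by (rule C1_family_not_closed[OF j(2) Ck der cont posr sg disjI1[OF obs] S1 S2 B])
  qed
  ultimately show ?thesis by (intro conjI)
qed


lemma sg1: "(1::real) = 1 \<or> (1::real) = -1" by simp

lemma family_facts:
  fixes \<rho> \<rho>' :: "real \<Rightarrow> real"
  assumes m: "1 \<le> m" and Ck: "Ck m \<rho>"
    and der: "\<And>x. (\<rho> has_real_derivative \<rho>' x) (at x)"
    and cont: "continuous_on UNIV \<rho>'"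
    and posr: "\<And>y. 1 \<le> y \<Longrightarrow> 0 \<le> \<rho> y \<and> 0 < \<rho>' y"
    and sig: "\<sigma> = 1 \<or> \<sigma> = -1"
    and obs: "obsA (\<lambda>u. \<rho>' (\<sigma> * u)) m \<or> (\<sigma> = 1 \<and> m = 1 \<and> obsB \<rho>')"
  shows "C1 \<rho> \<and> \<not> Cinf \<rho>
     \<and> (\<forall>B>0. \<forall>S. scalar_arch S \<and> 2 \<le> S ! (length S - 2) \<longrightarrow> RNN_not_closed \<rho> S (cube (S ! 0) B))"
proof -
  have "C1 \<rho>" using C1_of_Ck[OF Ck m] .
  moreover have "\<not> Cinf \<rho>" by (rule not_Cinf[OF der m obs])
  moreover have "\<forall>B>0. \<forall>S. scalar_arch S \<and> 2 \<le> S ! (length S - 2) \<longrightarrow> RNN_not_closed \<rho> S (cube (S ! 0) B)"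
  proof (intro allI impI)
    fix B :: real and S assume B: "B > 0" and S: "scalar_arch S \<and> 2 \<le> S ! (length S - 2)"
    from S have S1: "scalar_arch S" and S2: "2 \<le> S ! (length S - 2)" by auto
    show "RNN_not_closed \<rho> S (cube (S ! 0) B)"
      by (rule C1_family_not_closed[OF m Ck der cont posr sig obs S1 S2 B])
  qed
  ultimately show ?thesis by (intro conjI)
qed

lemma obsA_I:
  assumes "e > 0" "c > 0" "\<And>u. 0 \<le> u \<Longrightarrow> u < e \<Longrightarrow> g u = g 0"
    "\<And>u. -e < u \<Longrightarrow> u < 0 \<Longrightarrow> c * \<bar>u\<bar> ^ m \<le> \<bar>g u - g 0\<bar>"
  shows "obsA g m"
  unfolding obsA_def using assms by blast

lemma obsB_I:
  assumes "e > 0" "c > 0" "\<And>u. \<bar>u\<bar> < e \<Longrightarrow> c * \<bar>u\<bar> \<le> g 0 - g u"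
  shows "obsB g"
  unfolding obsB_def using assms by blast

definition elu' :: "real \<Rightarrow> real" where "elu' x = exp (min x 0)"

lemma elu_deriv: "(elu has_real_derivative elu' x) (at x)"
proof -
  have eq: "elu = (\<lambda>x. if 0 \<le> x then x else exp x - 1)" by (rule ext) (simp add: elu_def)
  have "((\<lambda>x. if 0 \<le> x then x else exp x - 1) has_real_derivative (if 0 \<le> x then 1 else exp x)) (at x)"
    by (rule piecewise_deriv) (auto intro!: derivative_eq_intros)
  moreover have "(if 0 \<le> x then 1 else exp x) = elu' x" by (simp add: elu'_def min_def)
  ultimately show ?thesis unfolding eq by simp
qed

lemma elu'_cont: "continuous_on UNIV elu'"
  unfolding elu'_def[abs_def] by (intro continuous_intros)

lemma elu_Ck1: "Ck 1 elu"
  unfolding One_nat_def Ck_Suc Ck_0 using elu_deriv elu'_cont by blast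

lemma elu_obs: "obsA (\<lambda>u. elu' (1 * u)) 1"
proof (rule obsA_I[of 1 "exp (-1)"])
  show "elu' (1 * u) = elu' (1 * 0)" if "0 \<le> u" "u < 1" for u using that by (simp add: elu'_def)
  fix u :: real
  assume u0: "-1 < u" "u < 0"
  then have u: "-1 < u \<and> u < 0" by simp
  have "exp (-1) \<le> exp u" using u by simp
  moreover have "- u \<le> exp (- u) - 1" using exp_ge_add_one_self[of "-u"] by simp
  ultimately have "exp (-1) * (- u) \<le> exp u * (exp (- u) - 1)"
    using u by (intro mult_mono) auto
  also have "\<dots> = 1 - exp u" by (simp add: algebra_simps exp_minus)
  finally have "exp (-1) * \<bar>u\<bar> \<le> 1 - exp u" using u by simp
  moreover have "exp u \<le> 1" using u by simp
  ultimately show "exp (-1) * \<bar>u\<bar> ^ 1 \<le> \<bar>elu' (1 * u) - elu' (1 * 0)\<bar>"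
    using u by (simp add: elu'_def min_def)
qed auto

lemma elu_facts: "C1 elu \<and> \<not> Cinf elu
     \<and> (\<forall>B>0. \<forall>S. scalar_arch S \<and> 2 \<le> S ! (length S - 2) \<longrightarrow> RNN_not_closed elu S (cube (S ! 0) B))"
proof (rule family_facts[OF _ elu_Ck1 elu_deriv elu'_cont _ sg1 disjI1[OF elu_obs]])
  show "0 \<le> elu y \<and> 0 < elu' y" if "1 \<le> y" for y using that by (simp add: elu_def elu'_def)
qed simp

definition softsign' :: "real \<Rightarrow> real" where "softsign' x = 1 / (1 + \<bar>x\<bar>)^2"

lemma softsign_deriv: "(softsign has_real_derivative softsign' x) (at x)"
proof -
  have eq: "softsign = (\<lambda>x. if 0 \<le> x then x / (1 + x) else x / (1 - x))"
    by (rule ext) (simp add: softsign_def)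
  have "((\<lambda>x. if 0 \<le> x then x / (1 + x) else x / (1 - x)) has_real_derivative
      (if 0 \<le> x then 1 / (1 + x)^2 else 1 / (1 - x)^2)) (at x)"
  proof (rule piecewise_deriv)
    show "((\<lambda>x. x / (1 + x)) has_real_derivative 1 / (1 + x)^2) (at x)" if "0 \<le> x" for x :: real
    proof -
      have "1 + x \<noteq> 0" using that by simp
      then show ?thesis by (auto intro!: derivative_eq_intros simp: field_simps power2_eq_square)
    qed
    show "((\<lambda>x. x / (1 - x)) has_real_derivative 1 / (1 - x)^2) (at x)" if "x \<le> 0" for x :: real
    proof -
      have "1 - x \<noteq> 0" using that by simp
      then show ?thesis by (auto intro!: derivative_eq_intros simp: field_simps power2_eq_square)
    qed
  qed simp_all
  moreover have "(if 0 \<le> x then 1 / (1 + x)^2 else 1 / (1 - x)^2) = softsign' x"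
    by (simp add: softsign'_def)
  ultimately show ?thesis unfolding eq by simp
qed

lemma softsign'_cont: "continuous_on UNIV softsign'"
proof -
  have "\<And>x::real. (1 + \<bar>x\<bar>)^2 \<noteq> 0" by (metis abs_ge_zero add_pos_nonneg power_not_zero zero_less_one less_irrefl)
  then show ?thesis unfolding softsign'_def[abs_def] by (intro continuous_intros) auto
qed

lemma softsign_Ck1: "Ck 1 softsign"
  unfolding One_nat_def Ck_Suc Ck_0 using softsign_deriv softsign'_cont by blast

lemma softsign_obs: "obsB softsign'"
proof (rule obsB_I[of 1 "1/2"])
  fix u :: real assume u: "\<bar>u\<bar> < 1"
  define v where "v = \<bar>u\<bar>"
  have v: "0 \<le> v" "v < 1" using u by (auto simp: v_def)
  have pos: "0 < (1 + v)^2" using v by simp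
  have "1 / 2 * v * (1 + v)^2 \<le> (1 + v)^2 - 1"
  proof -
    have "(1 + v)^2 \<le> 2^2" using v by (intro power_mono) auto
    then have "(1 + v)^2 \<le> 4" by simp
    then have "v * (1 + v)^2 \<le> v * 4" using v by (simp add: mult_left_mono)
    then have a: "1 / 2 * v * (1 + v)^2 \<le> 2 * v" by simp
    have "0 \<le> v * v" using v by simp
    then have b: "2 * v \<le> (1 + v)^2 - 1" by (simp add: power2_eq_square algebra_simps)
    show ?thesis using a b by linarith
  qed
  then have "1 / 2 * v \<le> ((1 + v)^2 - 1) / (1 + v)^2" using pos by (simp add: le_divide_eq)
  also have "\<dots> = 1 - 1 / (1 + v)^2" using pos by (simp add: field_simps)
  finally show "1 / 2 * \<bar>u\<bar> \<le> softsign' 0 - softsign' u" by (simp add: softsign'_def v_def)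
qed auto

lemma softsign_facts: "C1 softsign \<and> \<not> Cinf softsign
     \<and> (\<forall>B>0. \<forall>S. scalar_arch S \<and> 2 \<le> S ! (length S - 2) \<longrightarrow> RNN_not_closed softsign S (cube (S ! 0) B))"
proof (rule family_facts[OF _ softsign_Ck1 softsign_deriv softsign'_cont _ sg1])
  show "0 \<le> softsign y \<and> 0 < softsign' y" if "1 \<le> y" for y
    using that by (simp add: softsign_def softsign'_def)
  show "obsA (\<lambda>u. softsign' (1 * u)) 1 \<or> (1::real) = 1 \<and> 1 = (1::nat) \<and> obsB softsign'"
    using softsign_obs by simp
qed simp


definition qq :: "real \<Rightarrow> real \<Rightarrow> real" where "qq a x = sqrt (1 + a * x^2)"

lemma qq_pos: "0 \<le> a \<Longrightarrow> 0 < qq a x"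
  unfolding qq_def by (simp add: add_pos_nonneg)

lemma qq_ge1: "0 \<le> a \<Longrightarrow> 1 \<le> qq a x"
  unfolding qq_def by simp

lemma qq_sq: "0 \<le> a \<Longrightarrow> (qq a x)^2 = 1 + a * x^2"
  unfolding qq_def by (simp add: add_nonneg_nonneg)

lemma qq_deriv:
  assumes a: "0 \<le> a"
  shows "(qq a has_real_derivative a * x / qq a x) (at x)"
proof -
  have p: "0 < 1 + a * x^2" by (simp add: a add_pos_nonneg)
  have "((\<lambda>x. sqrt (1 + a * x^2)) has_real_derivative inverse (sqrt (1 + a * x^2)) / 2 * (a * (2 * x))) (at x)"
    by (rule DERIV_chain2[where f=sqrt and g="\<lambda>x. 1 + a * x^2", OF DERIV_real_sqrt[OF p]])
       (auto intro!: derivative_eq_intros)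
  moreover have "inverse (sqrt (1 + a * x^2)) / 2 * (a * (2 * x)) = a * x / qq a x"
    by (simp add: qq_def field_simps)
  ultimately show ?thesis unfolding qq_def[abs_def] by simp
qed

lemma f2_deriv:
  assumes a: "0 \<le> a"
  shows "((\<lambda>x. x / qq a x) has_real_derivative 1 / (qq a x)^3) (at x)"
proof -
  have q: "qq a x > 0" using qq_pos[OF a] .
  have "((\<lambda>x. x / qq a x) has_real_derivative (1 * qq a x - x * (a * x / qq a x)) / (qq a x * qq a x)) (at x)"
    by (rule DERIV_divide[OF DERIV_ident qq_deriv[OF a]]) (use q in simp)
  moreover have "(1 * qq a x - x * (a * x / qq a x)) / (qq a x * qq a x) = 1 / (qq a x)^3"
  proof -
    have "(1 * qq a x - x * (a * x / qq a x)) = ((qq a x)^2 - a * x^2) / qq a x"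
      using q by (simp add: field_simps power2_eq_square)
    also have "\<dots> = 1 / qq a x" using qq_sq[OF a, of x] by simp
    finally show ?thesis using q by (simp add: field_simps power3_eq_cube)
  qed
  ultimately show ?thesis by simp
qed

lemma f2'_deriv:
  assumes a: "0 \<le> a"
  shows "((\<lambda>x. 1 / (qq a x)^3) has_real_derivative - 3 * a * x / (qq a x)^5) (at x)"
proof -
  have q: "qq a x > 0" using qq_pos[OF a] .
  note d3 = DERIV_power[OF qq_deriv[OF a], of 3]
  have "((\<lambda>x. inverse ((qq a x)^3)) has_real_derivative
      - (of_nat 3 * ((a * x / qq a x) * (qq a x)^(3 - Suc 0)) * inverse (((qq a x)^3)^Suc (Suc 0)))) (at x)"
    by (rule DERIV_inverse_fun[OF d3]) (use q in simp)
  moreover have "- (of_nat 3 * ((a * x / qq a x) * (qq a x)^(3 - Suc 0)) * inverse (((qq a x)^3)^Suc (Suc 0)))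
      = - 3 * a * x / (qq a x)^5"
  proof -
    have "qq a x ^ 7 = qq a x * qq a x ^ 6" by (simp add: power_Suc[symmetric])
    then show ?thesis using q by (simp add: field_simps)
  qed
  ultimately show ?thesis by (simp add: inverse_eq_divide)
qed

definition isrlu' :: "real \<Rightarrow> real \<Rightarrow> real" where
  "isrlu' a x = (if 0 \<le> x then 1 else 1 / (qq a x)^3)"

definition isrlu'' :: "real \<Rightarrow> real \<Rightarrow> real" where
  "isrlu'' a x = - 3 * a * min x 0 / (qq a x)^5"

lemma isrlu_deriv:
  assumes a: "0 \<le> a"
  shows "(isrlu a has_real_derivative isrlu' a x) (at x)"
proof -
  have eq: "isrlu a = (\<lambda>x. if 0 \<le> x then x else x / qq a x)" by (rule ext) (simp add: isrlu_def qq_def)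
  show ?thesis unfolding eq isrlu'_def
    by (rule piecewise_deriv[OF _ f2_deriv[OF a]]) (auto simp: qq_def)
qed

lemma isrlu'_deriv:
  assumes a: "0 \<le> a"
  shows "(isrlu' a has_real_derivative isrlu'' a x) (at x)"
proof -
  have eq: "isrlu' a = (\<lambda>x. if 0 \<le> x then 1 else 1 / (qq a x)^3)" by (rule ext) (simp add: isrlu'_def)
  have "(isrlu' a has_real_derivative (if 0 \<le> x then 0 else - 3 * a * x / (qq a x)^5)) (at x)"
    unfolding eq by (rule piecewise_deriv[OF _ f2'_deriv[OF a]]) (auto simp: qq_def)
  moreover have "(if 0 \<le> x then 0 else - 3 * a * x / (qq a x)^5) = isrlu'' a x"
    by (simp add: isrlu''_def min_def)
  ultimately show ?thesis by simp
qed

lemma isrlu''_cont: "0 \<le> a \<Longrightarrow> continuous_on UNIV (isrlu'' a)"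
proof -
  assume a: "0 \<le> a"
  have nz: "\<And>x. (qq a x)^5 \<noteq> 0" using qq_pos[OF a] by (metis power_not_zero order_less_irrefl)
  have "continuous_on UNIV (qq a)" using qq_deriv[OF a] by (meson DERIV_isCont continuous_at_imp_continuous_on)
  then show ?thesis unfolding isrlu''_def[abs_def] using nz by (intro continuous_intros) auto
qed

lemma isrlu_Ck2: "0 \<le> a \<Longrightarrow> Ck 2 (isrlu a)"
proof -
  assume a: "0 \<le> a"
  have "Ck 1 (isrlu' a)" unfolding One_nat_def Ck_Suc Ck_0
    using isrlu'_deriv[OF a] isrlu''_cont[OF a] by blast
  then have "Ck (Suc 1) (isrlu a)" unfolding Ck_Suc[of 1] using isrlu_deriv[OF a] by blast
  then show ?thesis by (simp add: numeral_2_eq_2)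
qed

lemma isrlu'_cont: "0 \<le> a \<Longrightarrow> continuous_on UNIV (isrlu' a)"
  using isrlu'_deriv by (meson DERIV_isCont continuous_at_imp_continuous_on)

lemma isrlu_obs:
  assumes a: "0 < a"
  shows "obsA (\<lambda>u. isrlu' a (1 * u)) 2"
proof (rule obsA_I[of "1 / (a + 1)" "a / 2"])
  show "0 < 1 / (a + 1)" "0 < a / 2" using a by auto
  show "isrlu' a (1 * u) = isrlu' a (1 * 0)" if "0 \<le> u" for u using that by (simp add: isrlu'_def)
  fix u :: real assume u: "- (1 / (a + 1)) < u" "u < 0"
  have q1: "1 \<le> qq a u" using qq_ge1 a by simp
  have "\<bar>u\<bar> < 1 / (a + 1)" using u by simp
  then have "\<bar>u\<bar> * (a + 1) < 1" using a by (simp add: less_divide_eq)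
  moreover have "a * \<bar>u\<bar> \<le> \<bar>u\<bar> * (a + 1)" by (simp add: algebra_simps)
  ultimately have au: "a * \<bar>u\<bar> < 1" by linarith
  have "\<bar>u\<bar> * (a + 1) \<ge> \<bar>u\<bar>" using a by (simp add: mult_le_cancel_left1)
  then have u1: "\<bar>u\<bar> \<le> 1" using \<open>\<bar>u\<bar> * (a + 1) < 1\<close> by linarith
  have "a * u^2 = (a * \<bar>u\<bar>) * \<bar>u\<bar>" by (simp add: power2_eq_square abs_mult_self_eq)
  also have "\<dots> \<le> (a * \<bar>u\<bar>) * 1" using u1 a by (intro mult_left_mono) auto
  finally have w1: "a * u^2 \<le> 1" using au by linarith
  define w where "w = a * u^2"
  have w: "0 \<le> w" "w \<le> 1" using a w1 by (auto simp: w_def)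
  have "1 / (qq a u)^3 \<le> 1 / (qq a u)^2"
    using q1 by (intro divide_left_mono power_increasing) (auto simp: power_increasing)
  also have "\<dots> = 1 / (1 + w)" using qq_sq[of a u] a by (simp add: w_def)
  finally have "1 - 1 / (1 + w) \<le> 1 - 1 / (qq a u)^3" by simp
  moreover have "w / 2 \<le> 1 - 1 / (1 + w)"
  proof -
    have "1 - 1 / (1 + w) = w / (1 + w)" using w by (simp add: field_simps)
    moreover have "w / 2 \<le> w / (1 + w)" using w by (intro divide_left_mono) auto
    ultimately show ?thesis by simp
  qed
  moreover have "1 / (qq a u)^3 \<le> 1" using q1 by simp
  ultimately show "a / 2 * \<bar>u\<bar>^2 \<le> \<bar>isrlu' a (1 * u) - isrlu' a (1 * 0)\<bar>"
    using u by (simp add: isrlu'_def w_def)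
qed

lemma isrlu_facts:
  assumes a: "0 < a"
  shows "C1 (isrlu a) \<and> \<not> Cinf (isrlu a)
     \<and> (\<forall>B>0. \<forall>S. scalar_arch S \<and> 2 \<le> S ! (length S - 2) \<longrightarrow> RNN_not_closed (isrlu a) S (cube (S ! 0) B))"
proof (rule family_facts[OF _ isrlu_Ck2 isrlu_deriv isrlu'_cont _ sg1 disjI1[OF isrlu_obs[OF a]]])
  show "0 \<le> isrlu a y \<and> 0 < isrlu' a y" if "1 \<le> y" for y
    using that by (simp add: isrlu_def isrlu'_def)
qed (use a in simp_all)


lemma analytic_facts:
  fixes \<rho> :: "real \<Rightarrow> real"
  assumes M: "\<And>x. \<bar>\<rho> x\<bar> \<le> M"
    and d: "(\<rho> has_real_derivative D) (at 0)" "D \<noteq> 0"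
    and \<delta>: "\<delta> > 0" and hol: "F holomorphic_on strip \<delta>"
    and FR: "\<And>x. F (of_real x) = of_real (\<rho> x)"
  shows "bounded (range \<rho>) \<and> real_analytic \<rho> \<and> (\<exists>x y. \<rho> x \<noteq> \<rho> y)
     \<and> (\<forall>B>0. \<forall>S. scalar_arch S \<and> 2 \<le> S ! (length S - 2) \<longrightarrow> RNN_not_closed \<rho> S (cube (S ! 0) B))"
proof -
  have "bounded (range \<rho>)" unfolding bounded_iff using M by auto
  moreover have "real_analytic \<rho>" by (rule real_analytic_from_complex[OF \<delta> hol FR])
  moreover have "\<exists>x y. \<rho> x \<noteq> \<rho> y" by (rule nonconst_from_deriv[OF d])
  moreover have "\<forall>B>0. \<forall>S. scalar_arch S \<and> 2 \<le> S ! (length S - 2) \<longrightarrow> RNN_not_closed \<rho> S (cube (S ! 0) B)"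
  proof (intro allI impI)
    fix B :: real and S assume B: "B > 0" and S: "scalar_arch S \<and> 2 \<le> S ! (length S - 2)"
    from S have S1: "scalar_arch S" by auto
    show "RNN_not_closed \<rho> S (cube (S ! 0) B)"
      by (rule analytic_family_not_closed[OF M d \<delta> hol FR S1 B])
  qed
  ultimately show ?thesis by (intro conjI)
qed

lemma exp_strip_ne:
  assumes "\<bar>Im z\<bar> < 1"
  shows "1 + exp z \<noteq> 0"
proof -
  have "pi / 2 > 1" using pi_gt3 by simp
  then have "0 < cos (Im z)" using assms by (intro cos_gt_zero_pi) auto
  then have r: "0 < Re (1 + exp z)" by (simp add: Re_exp add_pos_pos)
  show ?thesis
  proof
    assume "1 + exp z = 0"
    then have "Re (1 + exp z) = 0" by (simp only: zero_complex.sel)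
    then show False using r by simp
  qed
qed

lemma sigmoid_facts: "bounded (range sigmoid) \<and> real_analytic sigmoid \<and> (\<exists>x y. sigmoid x \<noteq> sigmoid y)
     \<and> (\<forall>B>0. \<forall>S. scalar_arch S \<and> 2 \<le> S ! (length S - 2) \<longrightarrow> RNN_not_closed sigmoid S (cube (S ! 0) B))"
proof (rule analytic_facts[of sigmoid 1 "1/4" 1 "\<lambda>z. 1 / (1 + exp (- z))"])
  show "\<bar>sigmoid x\<bar> \<le> 1" for x
  proof -
    have "1 \<le> 1 + exp (- x)" by simp
    then show ?thesis by (simp add: sigmoid_def add_pos_pos)
  qed
  show "(sigmoid has_real_derivative 1 / 4) (at 0)"
    unfolding sigmoid_def[abs_def]
    by (auto intro!: derivative_eq_intros simp: add_pos_pos)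
  show "(\<lambda>z. 1 / (1 + exp (- z))) holomorphic_on strip 1"
  proof (intro holomorphic_intros)
    fix z assume "z \<in> strip 1"
    then have "\<bar>Im (- z)\<bar> < 1" by (simp add: strip_def)
    then show "1 + exp (- z) \<noteq> 0" by (rule exp_strip_ne)
  qed
  show "1 / (1 + exp (- complex_of_real x)) = complex_of_real (sigmoid x)" for x
    by (simp add: sigmoid_def exp_of_real[symmetric])
qed simp_all

lemma tanh_alt: "tanh (x::real) = 2 / (1 + exp (- 2 * x)) - 1"
proof -
  have "1 + exp (- 2 * x) \<noteq> 0" by (simp add: add_pos_pos)
  then show ?thesis unfolding tanh_real_altdef by (simp add: field_simps)
qed

lemma tanh_facts: "bounded (range (tanh :: real \<Rightarrow> real)) \<and> real_analytic tanh \<and> (\<exists>x y::real. tanh x \<noteq> tanh y)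
     \<and> (\<forall>B>0. \<forall>S. scalar_arch S \<and> 2 \<le> S ! (length S - 2) \<longrightarrow> RNN_not_closed tanh S (cube (S ! 0) B))"
proof (rule analytic_facts[of tanh 1 1 "1/2" "\<lambda>z. 2 / (1 + exp (- 2 * z)) - 1"])
  show "\<bar>tanh x\<bar> \<le> 1" for x :: real using tanh_real_bounds[of x] by auto
  have eq: "(tanh :: real \<Rightarrow> real) = (\<lambda>x. 2 / (1 + exp (- 2 * x)) - 1)" by (rule ext) (rule tanh_alt)
  show "(tanh has_real_derivative 1) (at 0)"
    unfolding eq by (auto intro!: derivative_eq_intros simp: add_pos_pos)
  show "(\<lambda>z. 2 / (1 + exp (- 2 * z)) - 1) holomorphic_on strip (1/2)"
  proof (intro holomorphic_intros)
    fix z assume "z \<in> strip (1/2)"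
    then have "\<bar>Im (- 2 * z)\<bar> < 1" by (simp add: strip_def)
    then show "1 + exp (- 2 * z) \<noteq> 0" by (rule exp_strip_ne)
  qed
  show "2 / (1 + exp (- 2 * complex_of_real x)) - 1 = complex_of_real (tanh x)" for x
  proof -
    have "exp (- 2 * complex_of_real x) = of_real (exp (- 2 * x))" by (simp flip: exp_of_real)
    then show ?thesis by (simp add: tanh_alt)
  qed
qed simp_all

lemma arctan_facts: "bounded (range arctan) \<and> real_analytic arctan \<and> (\<exists>x y. arctan x \<noteq> arctan y)
     \<and> (\<forall>B>0. \<forall>S. scalar_arch S \<and> 2 \<le> S ! (length S - 2) \<longrightarrow> RNN_not_closed arctan S (cube (S ! 0) B))"
proof (rule analytic_facts[of arctan "pi / 2" 1 1 Arctan])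
  show "\<bar>arctan x\<bar> \<le> pi / 2" for x using arctan_bounded[of x] by auto
  show "(arctan has_real_derivative 1) (at 0)" using DERIV_arctan[of 0] by simp
  show "Arctan holomorphic_on strip 1"
    by (rule holomorphic_on_Arctan) (simp add: strip_def)
  show "Arctan (complex_of_real x) = complex_of_real (arctan x)" for x by (rule Arctan_of_real)
qed simp_all

lemma isru_facts:
  assumes a: "0 < a"
  shows "bounded (range (isru a)) \<and> real_analytic (isru a) \<and> (\<exists>x y. isru a x \<noteq> isru a y)
     \<and> (\<forall>B>0. \<forall>S. scalar_arch S \<and> 2 \<le> S ! (length S - 2) \<longrightarrow> RNN_not_closed (isru a) S (cube (S ! 0) B))"
proof (rule analytic_facts[of "isru a" "1 / sqrt a" 1 "1 / sqrt a" "\<lambda>z. z / csqrt (1 + of_real a * z^2)"])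
  show "\<bar>isru a x\<bar> \<le> 1 / sqrt a" for x
  proof -
    have "sqrt (a * x^2) \<le> sqrt (1 + a * x^2)" by simp
    moreover have "sqrt (a * x^2) = sqrt a * \<bar>x\<bar>" using a by (simp add: real_sqrt_mult)
    ultimately have "sqrt a * \<bar>x\<bar> \<le> sqrt (1 + a * x^2)" by simp
    moreover have "0 < sqrt (1 + a * x^2)" using a by (simp add: add_pos_nonneg)
    moreover have "0 < sqrt a" using a by simp
    ultimately show ?thesis unfolding isru_def
      by (simp add: abs_div divide_le_eq field_simps)
  qed
  have eq: "isru a = (\<lambda>x. x / qq a x)" by (rule ext) (simp add: isru_def qq_def)
  show "(isru a has_real_derivative 1) (at 0)"
    using f2_deriv[of a 0] a unfolding eq by (simp add: qq_def)
  show "0 < 1 / sqrt a" using a by simp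
  show "(\<lambda>z. z / csqrt (1 + of_real a * z^2)) holomorphic_on strip (1 / sqrt a)"
  proof -
    have re: "0 < Re (1 + of_real a * z^2)" if "z \<in> strip (1 / sqrt a)" for z
    proof -
      have "\<bar>Im z\<bar> < 1 / sqrt a" using that by (simp add: strip_def)
      then have "\<bar>Im z\<bar> * sqrt a < 1" using a by (simp add: less_divide_eq)
      then have "(\<bar>Im z\<bar> * sqrt a)^2 < 1^2" using a by (intro power_strict_mono) auto
      then have A: "a * (Im z)^2 < 1" using a by (simp add: power_mult_distrib mult.commute)
      have "Re (z^2) = (Re z)^2 - (Im z)^2" by (simp add: power2_eq_square)
      then have "0 \<le> Re (z^2) + (Im z)^2" by simp
      then have "0 \<le> a * (Re (z^2) + (Im z)^2)" using a by simp
      then have "0 \<le> a * Re (z^2) + a * (Im z)^2" by (simp add: algebra_simps)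
      then show ?thesis using A by simp
    qed
    show ?thesis
    proof (intro holomorphic_intros)
      fix z assume z: "z \<in> strip (1 / sqrt a)"
      show "1 + complex_of_real a * z\<^sup>2 \<notin> \<real>\<^sub>\<le>\<^sub>0"
        using re[OF z] by (auto simp: complex_nonpos_Reals_iff)
      show "csqrt (1 + complex_of_real a * z\<^sup>2) \<noteq> 0"
      proof
        assume "csqrt (1 + complex_of_real a * z\<^sup>2) = 0"
        then have "1 + complex_of_real a * z\<^sup>2 = 0" by simp
        then have "Re (1 + complex_of_real a * z\<^sup>2) = 0" by (simp only: zero_complex.sel)
        then show False using re[OF z] by simp
      qed
    qed
  qed
  show "complex_of_real x / csqrt (1 + complex_of_real a * (complex_of_real x)^2) = complex_of_real (isru a x)" for x
  proof -
    have "1 + complex_of_real a * (complex_of_real x)^2 = complex_of_real (1 + a * x^2)" by simp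
    moreover have "csqrt (complex_of_real (1 + a * x^2)) = complex_of_real (sqrt (1 + a * x^2))"
      using a by (simp add: add_nonneg_nonneg)
    ultimately show ?thesis by (simp add: isru_def)
  qed
qed simp_all


theorem corollary3p4:
  shows "(\<forall>k\<ge>2. C1 (relu_pow k) \<and> \<not> Cinf (relu_pow k))
       \<and> (C1 elu \<and> \<not> Cinf elu)
       \<and> (C1 softsign \<and> \<not> Cinf softsign)
       \<and> (\<forall>a>0. C1 (isrlu a) \<and> \<not> Cinf (isrlu a))
       \<and> (\<forall>a>0. bounded (range (isru a)) \<and> real_analytic (isru a) \<and> (\<exists>x y. isru a x \<noteq> isru a y))
       \<and> (bounded (range sigmoid) \<and> real_analytic sigmoid \<and> (\<exists>x y. sigmoid x \<noteq> sigmoid y))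
       \<and> (bounded (range (tanh :: real \<Rightarrow> real)) \<and> real_analytic tanh \<and> (\<exists>x y::real. tanh x \<noteq> tanh y))
       \<and> (bounded (range arctan) \<and> real_analytic arctan \<and> (\<exists>x y. arctan x \<noteq> arctan y))
       \<and> (C1 softplus \<and> approx_homogeneous 1 0 softplus)
       \<and> (\<forall>\<rho>. \<rho> \<in> {relu_pow k | k. k \<ge> 2} \<union> {elu, softsign} \<union> {isrlu a | a. a > 0}
                  \<union> {isru a | a. a > 0} \<union> {sigmoid, tanh, arctan} \<longrightarrow>
            (\<forall>B>0. \<forall>S. scalar_arch S \<and> S ! (length S - 2) \<ge> 2 \<longrightarrow>
               RNN_not_closed \<rho> S (cube (S ! 0) B)))
       \<and> (\<forall>B>0. \<forall>S. scalar_arch S \<longrightarrow> RNN_not_closed softplus S (cube (S ! 0) B))"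
proof -
  let ?P = "\<lambda>\<rho>. \<forall>B>0. \<forall>S. scalar_arch S \<and> S ! (length S - 2) \<ge> 2 \<longrightarrow> RNN_not_closed \<rho> S (cube (S ! 0) B)"
  have r: "\<And>k. 2 \<le> k \<Longrightarrow> C1 (relu_pow k) \<and> \<not> Cinf (relu_pow k) \<and> ?P (relu_pow k)"
    using relu_pow_facts by blast
  have i: "\<And>a. 0 < a \<Longrightarrow> C1 (isrlu a) \<and> \<not> Cinf (isrlu a) \<and> ?P (isrlu a)"
    using isrlu_facts by blast
  have u: "\<And>a. 0 < a \<Longrightarrow> bounded (range (isru a)) \<and> real_analytic (isru a) \<and> (\<exists>x y. isru a x \<noteq> isru a y) \<and> ?P (isru a)"
    using isru_facts by blast
  have all: "?P \<rho>" if "\<rho> \<in> {relu_pow k | k. k \<ge> 2} \<union> {elu, softsign} \<union> {isrlu a | a. a > 0}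
                  \<union> {isru a | a. a > 0} \<union> {sigmoid, tanh, arctan}" for \<rho>
  proof -
    from that consider (R) k where "2 \<le> k" "\<rho> = relu_pow k" | (E) "\<rho> = elu" | (SS) "\<rho> = softsign"
      | (I) a where "0 < a" "\<rho> = isrlu a" | (U) a where "0 < a" "\<rho> = isru a"
      | (Sg) "\<rho> = sigmoid" | (T) "\<rho> = tanh" | (A) "\<rho> = arctan" by blast
    then show ?thesis
    proof cases
      case R then show ?thesis using r by blast
    next
      case E then show ?thesis using elu_facts by blast
    next
      case SS then show ?thesis using softsign_facts by blast
    next
      case I then show ?thesis using i by blast
    next
      case U then show ?thesis using u by blast
    next
      case Sg then show ?thesis using sigmoid_facts by blast
    next
      case T then show ?thesis using tanh_facts by blast
    next
      case A then show ?thesis using arctan_facts by blast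
    qed
  qed
  have sp: "\<forall>B>0. \<forall>S. scalar_arch S \<longrightarrow> RNN_not_closed softplus S (cube (S ! 0) B)"
    using softplus_not_closed by blast
  have c1: "\<forall>k\<ge>2. C1 (relu_pow k) \<and> \<not> Cinf (relu_pow k)" using r by blast
  have c2: "C1 elu \<and> \<not> Cinf elu" using elu_facts by blast
  have c3: "C1 softsign \<and> \<not> Cinf softsign" using softsign_facts by blast
  have c4: "\<forall>a>0. C1 (isrlu a) \<and> \<not> Cinf (isrlu a)" using i by blast
  have c5: "\<forall>a>0. bounded (range (isru a)) \<and> real_analytic (isru a) \<and> (\<exists>x y. isru a x \<noteq> isru a y)"
    using u by blast
  have c6: "bounded (range sigmoid) \<and> real_analytic sigmoid \<and> (\<exists>x y. sigmoid x \<noteq> sigmoid y)"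
    using sigmoid_facts by blast
  have c7: "bounded (range (tanh :: real \<Rightarrow> real)) \<and> real_analytic tanh \<and> (\<exists>x y::real. tanh x \<noteq> tanh y)"
    using tanh_facts by blast
  have c8: "bounded (range arctan) \<and> real_analytic arctan \<and> (\<exists>x y. arctan x \<noteq> arctan y)"
    using arctan_facts by blast
  have c9: "C1 softplus \<and> approx_homogeneous 1 0 softplus" using softplus_C1 softplus_approx_hom by blast
  have c10: "\<forall>\<rho>. \<rho> \<in> {relu_pow k | k. k \<ge> 2} \<union> {elu, softsign} \<union> {isrlu a | a. a > 0}
                  \<union> {isru a | a. a > 0} \<union> {sigmoid, tanh, arctan} \<longrightarrow> ?P \<rho>"
    using all by blast
  show ?thesis by (intro conjI c1 c2 c3 c4 c5 c6 c7 c8 c9 c10 sp)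
qed

end
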